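(* Let $v$, $V$ be as in the context, $f=v-V$, and assume $(H1')_\delta$ with $0<\delta<1/(2p)$. Let $\overline c_p>0$ be a constant depending only on $p$ such that $\frac{p+1}{2(1+\overline c_p\delta)^2}\mathsf{E}[f(t)]\le\mathcal{E}[v(t)]\le\frac{p+1}{2}(1+\overline c_p\delta)^2\mathsf{E}[f(t)]$ for all $t\ge t_0$. Then for each $k,j$ there is a constant $\widetilde c_{k,j,p}>0$ such that for all $t\ge t_0$ $$\frac{\sqrt2\,p}{\sqrt{p+1}\,(1+\overline c_p\delta)}\mathsf{Q}_{k,j}[f(t)]-\widetilde c_{k,j,p}\mathsf{E}[f(t)]^{1/2}\le\mathcal{Q}_{k,j}[v(t)]\le\frac{\sqrt2\,p}{\sqrt{p+1}}(1+\overline c_p\delta)\mathsf{Q}_{k,j}[f(t)]+\widetilde c_{k,j,p}\mathsf{E}[f(t)]^{1/2}.$$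
   Context: Let $N\ge1$, let $\Omega\subset\mathbb{R}^N$ be a bounded domain with $C^{2,\alpha}$ boundary, $m\in(\frac{(N-2)_+}{N+2},1)$, $p=1/m$. Let $u\ge0$ solve $u_\tau=\Delta u^m$ in $(0,\infty)\times\Omega$, $u=0$ on $\partial\Omega$, $u(0)=u_0$ with $0\le u_0\in L^q(\Omega)$, $q\ge1$, $q>N(1-m)/2$ if $m<(N-2)/N$; $T>0$ its extinction time, $\mathsf{c}=\frac{1}{(1-m)T}$, $w(t,x)=e^{\mathsf{c}t}u(T-Te^{-t/T},x)$, $v=w^m$ (so $\partial_tv^p=\Delta v+\mathsf{c}v^p$, $v=0$ on $\partial\Omega$). $S$ is the positive classical solution of $-\Delta S^m=\mathsf{c}S$, $S=0$ on $\partial\Omega$, with $w(t)\to S$ uniformly; $V=S^m$, so $-\Delta V=\mathsf{c}V^p$. $(H1')_\delta$: there is $t_0$ with $|v-V|\le\delta V$ a.e. on $[t_0,\infty)\times\Omega$. $L^2_V$: inner product $\langle f,g\rangle_{L^2_V}=\int_\Omega fgV^{p-1}dx$. The problem $-\Delta\varphi=\lambda V^{p-1}\varphi$, $\varphi=0$ on $\partial\Omega$ has distinct eigenvalues $\lambda_{V,1}<\lambda_{V,2}<\dots$ with eigenspaces of dimension $N_k$ and $L^2_V$-orthonormal bases $\{\phi_{k,j}\}_{j=1}^{N_k}$. $\mathsf{E}[f]=\int_\Omega f^2V^{p-1}dx$; $\mathcal{E}[v]=\int_\Omega[(v^{p+1}-V^{p+1})-\frac{p+1}{p}(v^p-V^p)V]dx$;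 linear Rayleigh quotient $\mathsf{Q}_{k,j}[\psi]=|\langle\psi,\phi_{k,j}\rangle_{L^2_V}|/\|\psi\|_{L^2_V}$; nonlinear quotient $\mathcal{Q}_{k,j}[v]=|\int_\Omega(v^p-V^p)\phi_{k,j}dx|/\mathcal{E}[v]^{1/2}$. *)

theory Defs
  imports "HOL-Analysis.Analysis"
begin

definition d2 :: "('a::euclidean_space \<Rightarrow> real) \<Rightarrow> 'a \<Rightarrow> 'a \<Rightarrow> 'a \<Rightarrow> real" where
  "d2 f b c x = frechet_derivative (\<lambda>y. frechet_derivative f (at y) b) (at x) c"

definition laplacian :: "('a::euclidean_space \<Rightarrow> real) \<Rightarrow> 'a \<Rightarrow> real" where
  "laplacian f x = (\<Sum>b\<in>Basis. d2 f b b x)"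

definition C2_on :: "'a::euclidean_space set \<Rightarrow> ('a \<Rightarrow> real) \<Rightarrow> bool" where
  "C2_on U f \<longleftrightarrow>
     (\<forall>x\<in>U. f differentiable (at x)) \<and>
     (\<forall>b\<in>Basis. \<forall>x\<in>U. (\<lambda>y. frechet_derivative f (at y) b) differentiable (at x)) \<and>
     (\<forall>b\<in>Basis. \<forall>c\<in>Basis. continuous_on U (d2 f b c))"

definition C2alpha_boundary :: "real \<Rightarrow> 'a::euclidean_space set \<Rightarrow> bool" where
  "C2alpha_boundary \<alpha> \<Omega> \<longleftrightarrow>
     (\<forall>z\<in>frontier \<Omega>. \<exists>r>0. \<exists>\<rho>.
        C2_on (ball z r) \<rho> \<and>
        (\<forall>b\<in>Basis. \<forall>c\<in>Basis. \<exists>L. \<forall>x\<in>ball z r. \<forall>y\<in>ball z r.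
            \<bar>d2 \<rho> b c x - d2 \<rho> b c y\<bar> \<le> L * dist x y powr \<alpha>) \<and>
        (\<forall>x\<in>ball z r. frechet_derivative \<rho> (at x) \<noteq> (\<lambda>_. 0)) \<and>
        \<Omega> \<inter> ball z r = {x\<in>ball z r. \<rho> x < 0})"

definition test_fun :: "'a::euclidean_space set \<Rightarrow> ('a \<Rightarrow> real) \<Rightarrow> bool" where
  "test_fun \<Omega> \<psi> \<longleftrightarrow> C2_on UNIV \<psi> \<and> (\<exists>K. compact K \<and> K \<subseteq> \<Omega> \<and> (\<forall>x. x \<notin> K \<longrightarrow> \<psi> x = 0))"

definition eigspace :: "'a::euclidean_space set \<Rightarrow> ('a \<Rightarrow> real) \<Rightarrow> real \<Rightarrow> real \<Rightarrow> ('a \<Rightarrow> real) set" where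
  "eigspace \<Omega> V p lam = {\<phi>. C2_on \<Omega> \<phi> \<and> continuous_on (closure \<Omega>) \<phi> \<and>
       (\<forall>x\<in>frontier \<Omega>. \<phi> x = 0) \<and>
       (\<forall>x\<in>\<Omega>. - laplacian \<phi> x = lam * V x powr (p - 1) * \<phi> x)}"

definition is_eigenvalue :: "'a::euclidean_space set \<Rightarrow> ('a \<Rightarrow> real) \<Rightarrow> real \<Rightarrow> real \<Rightarrow> bool" where
  "is_eigenvalue \<Omega> V p lam \<longleftrightarrow> (\<exists>\<phi>\<in>eigspace \<Omega> V p lam. \<exists>x\<in>\<Omega>. \<phi> x \<noteq> 0)"

definition L2V_inner :: "'a::euclidean_space set \<Rightarrow> ('a \<Rightarrow> real) \<Rightarrow> real \<Rightarrow> ('a \<Rightarrow> real) \<Rightarrow> ('a \<Rightarrow> real) \<Rightarrow> real" where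
  "L2V_inner \<Omega> V p f g = (\<integral>x. f x * g x * V x powr (p - 1) \<partial>lebesgue_on \<Omega>)"

definition L2V_norm :: "'a::euclidean_space set \<Rightarrow> ('a \<Rightarrow> real) \<Rightarrow> real \<Rightarrow> ('a \<Rightarrow> real) \<Rightarrow> real" where
  "L2V_norm \<Omega> V p f = sqrt (L2V_inner \<Omega> V p f f)"

definition linE :: "'a::euclidean_space set \<Rightarrow> ('a \<Rightarrow> real) \<Rightarrow> real \<Rightarrow> ('a \<Rightarrow> real) \<Rightarrow> real" where
  "linE \<Omega> V p f = (\<integral>x. (f x)\<^sup>2 * V x powr (p - 1) \<partial>lebesgue_on \<Omega>)"

definition nonlinE :: "'a::euclidean_space set \<Rightarrow> ('a \<Rightarrow> real) \<Rightarrow> real \<Rightarrow> ('a \<Rightarrow> real) \<Rightarrow> real" where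
  "nonlinE \<Omega> V p v = (\<integral>x. (v x powr (p + 1) - V x powr (p + 1))
       - (p + 1) / p * (v x powr p - V x powr p) * V x \<partial>lebesgue_on \<Omega>)"

definition linQ :: "'a::euclidean_space set \<Rightarrow> ('a \<Rightarrow> real) \<Rightarrow> real \<Rightarrow> ('a \<Rightarrow> real) \<Rightarrow> ('a \<Rightarrow> real) \<Rightarrow> real" where
  "linQ \<Omega> V p \<phi> \<psi> = \<bar>L2V_inner \<Omega> V p \<psi> \<phi>\<bar> / L2V_norm \<Omega> V p \<psi>"

definition nonlinQ :: "'a::euclidean_space set \<Rightarrow> ('a \<Rightarrow> real) \<Rightarrow> real \<Rightarrow> ('a \<Rightarrow> real) \<Rightarrow> ('a \<Rightarrow> real) \<Rightarrow> real" where
  "nonlinQ \<Omega> V p \<phi> v = \<bar>\<integral>x. (v x powr p - V x powr p) * \<phi> x \<partial>lebesgue_on \<Omega>\<bar>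
       / sqrt (nonlinE \<Omega> V p v)"

end

theory Submission
  imports Defs
begin

lemma bl_scale: "bounded_linear (H::'a::real_normed_vector \<Rightarrow> real) \<Longrightarrow> H (s *\<^sub>R b) = s * H b"
  by (simp add: bounded_linear.linear linear_scale)

lemma half_lt_aux: "x < e \<Longrightarrow> 0 < e \<Longrightarrow> x / 2 < (e::real)" by linarith

lemma local_max_second:
  fixes g :: "'a::euclidean_space \<Rightarrow> real"
  assumes U: "open U" "x \<in> U" and mx: "\<forall>y\<in>U. g y \<le> g x"
    and dg: "\<forall>y\<in>U. (g has_derivative Dg y) (at y)"
    and dH: "((\<lambda>y. Dg y b) has_derivative H) (at x)"
  shows "H b \<le> 0"
proof (rule ccontr)
  assume "\<not> H b \<le> 0" hence Hb: "H b > 0" by simp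
  have "Dg x = (\<lambda>v. 0)"
    using differential_zero_maxmin[OF U(2) U(1) dg[rule_format, OF U(2)]] mx by blast
  hence q0: "Dg x b = 0" by simp
  have lin: "bounded_linear H" using dH has_derivative_bounded_linear by blast
  have "((\<lambda>s. Dg (x + s *\<^sub>R b) b) has_derivative (\<lambda>s. H (s *\<^sub>R b))) (at 0)"
  proof -
    have "((\<lambda>s::real. x + s *\<^sub>R b) has_derivative (\<lambda>s. s *\<^sub>R b)) (at 0)"
      by (auto intro!: derivative_eq_intros)
    moreover have "((\<lambda>y. Dg y b) has_derivative H) (at (x + 0 *\<^sub>R b))" using dH by simp
    ultimately show ?thesis using diff_chain_at[of "\<lambda>s::real. x + s *\<^sub>R b" "\<lambda>s. s *\<^sub>R b" 0 "\<lambda>y. Dg y b" H]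
      by (simp add: o_def)
  qed
  note hd = this
  have "DERIV (\<lambda>s. Dg (x + s *\<^sub>R b) b) 0 :> H b"
  proof -
    have "(\<lambda>s. H (s *\<^sub>R b)) = (*) (H b)" by (auto simp: fun_eq_iff bl_scale[OF lin])
    thus ?thesis unfolding has_field_derivative_def using hd by simp
  qed
  from DERIV_pos_inc_right[OF this Hb] obtain d where d: "d > 0"
    "\<And>h. h > 0 \<Longrightarrow> h < d \<Longrightarrow> 0 < Dg (x + h *\<^sub>R b) b" using q0 by auto
  obtain e where e: "e > 0" "ball x e \<subseteq> U" using U open_contains_ball by blast
  define s1 where "s1 = min d (e / (norm b + 1)) / 2"
  have s1: "s1 > 0" "s1 < d" proof -
    have "e / (norm b + 1) > 0" using e(1) by (intro divide_pos_pos) (auto intro: add_nonneg_pos)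
    thus "s1 > 0" "s1 < d" using d by (auto simp: s1_def)
  qed
  have inU: "x + s *\<^sub>R b \<in> U" if "0 \<le> s" "s \<le> s1" for s
  proof -
    have "s1 * norm b < e"
    proof -
      have "s1 \<le> e / (norm b + 1) / 2" unfolding s1_def by (rule divide_right_mono) auto
      hence "s1 * norm b \<le> e / (norm b + 1) / 2 * norm b" by (rule mult_right_mono) auto
      also have "\<dots> = e * (norm b / (norm b + 1)) / 2" by simp
      also have "\<dots> < e"
      proof -
        have q: "norm b / (norm b + 1) < 1"
          by (simp add: divide_less_eq_1 add_nonneg_pos)
        have "e * (norm b / (norm b + 1)) < e * 1" by (rule mult_strict_left_mono[OF q e(1)])
        thus ?thesis using e(1) half_lt_aux[of "e * (norm b / (norm b + 1))" e] by simp
      qed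
      finally show ?thesis .
    qed
    hence "norm (s *\<^sub>R b) < e" using that
      by (smt (verit) mult_right_mono norm_ge_zero norm_scaleR)
    hence "x + s *\<^sub>R b \<in> ball x e" by (simp add: dist_norm)
    thus ?thesis using e by blast
  qed
  have der: "DERIV (\<lambda>s. g (x + s *\<^sub>R b)) s :> Dg (x + s *\<^sub>R b) b" if "0 \<le> s" "s \<le> s1" for s
  proof -
    have g1: "(g has_derivative Dg (x + s *\<^sub>R b)) (at (x + s *\<^sub>R b))" using dg inU[OF that] by blast
    have lin2: "bounded_linear (Dg (x + s *\<^sub>R b))" using g1 has_derivative_bounded_linear by blast
    have "((\<lambda>s::real. x + s *\<^sub>R b) has_derivative (\<lambda>s. s *\<^sub>R b)) (at s)"
      by (auto intro!: derivative_eq_intros)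
    from diff_chain_at[OF this g1] have "((\<lambda>s. g (x + s *\<^sub>R b)) has_derivative (\<lambda>t. Dg (x + s *\<^sub>R b) (t *\<^sub>R b))) (at s)"
      by (simp add: o_def)
    moreover have "(\<lambda>t. Dg (x + s *\<^sub>R b) (t *\<^sub>R b)) = (*) (Dg (x + s *\<^sub>R b) b)"
      by (auto simp: fun_eq_iff bl_scale[OF lin2])
    ultimately show ?thesis unfolding has_field_derivative_def by simp
  qed
  have "g (x + 0 *\<^sub>R b) < g (x + s1 *\<^sub>R b)"
  proof (rule DERIV_pos_imp_increasing_open[OF s1(1)])
    fix s assume "0 < s" "s < s1"
    thus "\<exists>y. DERIV (\<lambda>s. g (x + s *\<^sub>R b)) s :> y \<and> y > 0"
      using der d(2) s1 by (intro exI[of _ "Dg (x + s *\<^sub>R b) b"]) auto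
  next
    show "continuous_on {0..s1} (\<lambda>s. g (x + s *\<^sub>R b))"
      by (rule continuous_at_imp_continuous_on) (metis atLeastAtMost_iff der DERIV_isCont)
  qed
  thus False using mx inU[of s1] s1 by auto
qed

definition psi :: "('a::euclidean_space \<Rightarrow> real) \<Rightarrow> real \<Rightarrow> 'a \<Rightarrow> 'a \<Rightarrow> real" where
  "psi \<rho> \<beta> x y = \<rho> y + \<beta> * ((y - x) \<bullet> (y - x))"

lemma E1:
  fixes \<rho> :: "'a::euclidean_space \<Rightarrow> real"
  assumes "(\<rho> has_derivative DR) (at y)"
  shows "((\<lambda>y. exp (a * psi \<rho> \<beta> x y)) has_derivative
     (\<lambda>h. exp (a * psi \<rho> \<beta> x y) * (a * (DR h + 2 * \<beta> * ((y - x) \<bullet> h))))) (at y)"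
  unfolding psi_def
  by (rule derivative_eq_intros refl assms | simp)+ (auto simp: algebra_simps inner_commute)

lemma E2:
  fixes \<rho> :: "'a::euclidean_space \<Rightarrow> real"
  assumes "(\<rho> has_derivative DR y) (at y)" "((\<lambda>y. DR y b) has_derivative H2) (at y)"
  shows "((\<lambda>y. exp (a * psi \<rho> \<beta> x y) * (a * (DR y b + 2 * \<beta> * ((y - x) \<bullet> b)))) has_derivative
     (\<lambda>c. exp (a * psi \<rho> \<beta> x y) * (a * (DR y c + 2 * \<beta> * ((y - x) \<bullet> c))) * (a * (DR y b + 2 * \<beta> * ((y - x) \<bullet> b)))
        + exp (a * psi \<rho> \<beta> x y) * (a * (H2 c + 2 * \<beta> * (c \<bullet> b))))) (at y)"
proof -
  have e: "((\<lambda>y. exp (a * psi \<rho> \<beta> x y)) has_derivative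
     (\<lambda>h. exp (a * psi \<rho> \<beta> x y) * (a * (DR y h + 2 * \<beta> * ((y - x) \<bullet> h))))) (at y)"
    by (rule E1[OF assms(1)])
  have l: "((\<lambda>y. a * (DR y b + 2 * \<beta> * ((y - x) \<bullet> b))) has_derivative (\<lambda>c. a * (H2 c + 2 * \<beta> * (c \<bullet> b)))) (at y)"
    by (rule derivative_eq_intros refl assms | simp)+
  show ?thesis using has_derivative_mult[OF e l] by (simp add: algebra_simps)
qed


lemma max_principle:
  fixes g :: "'a::euclidean_space \<Rightarrow> real"
  assumes D: "open D" "bounded D" and gc: "continuous_on (closure D) g"
    and dg: "\<forall>y\<in>D. (g has_derivative Dg y) (at y)"
    and dH: "\<forall>y\<in>D. \<forall>b\<in>Basis. ((\<lambda>y. Dg y b) has_derivative H y b) (at y)"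
    and pos: "\<forall>y\<in>D. (\<Sum>b\<in>Basis. H y b b) > 0"
    and bd: "\<forall>y\<in>frontier D. g y \<le> 0"
  shows "\<forall>y\<in>D. g y \<le> 0"
proof (cases "D = {}")
  case True thus ?thesis by simp
next
  case False
  have "compact (closure D)" using D(2) by (simp add: compact_closure)
  moreover have "closure D \<noteq> {}" using False by simp
  ultimately obtain x0 where x0: "x0 \<in> closure D" "\<forall>y\<in>closure D. g y \<le> g x0"
    using continuous_attains_sup[OF _ _ gc] by blast
  show ?thesis
  proof (cases "g x0 \<le> 0")
    case True
    have "\<forall>y\<in>D. g y \<le> g x0" using x0(2) closure_subset by blast
    thus ?thesis using True by fastforce
  next
    case False
    hence "x0 \<notin> frontier D" using bd by (meson linorder_not_le)
    hence xD: "x0 \<in> D" using x0(1) closure_Un_frontier by blast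
    have mx: "\<forall>y\<in>D. g y \<le> g x0" using x0 closure_subset by blast
    have "\<forall>b\<in>Basis. H x0 b b \<le> 0"
      using local_max_second[OF D(1) xD mx dg] dH xD by blast
    hence "(\<Sum>b\<in>Basis. H x0 b b) \<le> 0" by (simp add: sum_nonpos)
    thus ?thesis using pos xD by (meson linorder_not_le)
  qed
qed

lemma sum_sq_grad:
  fixes L :: "'a::euclidean_space \<Rightarrow> real"
  shows "(\<Sum>b\<in>Basis. (L b + c * (w \<bullet> b))\<^sup>2) = (norm ((\<Sum>b\<in>Basis. L b *\<^sub>R b) + c *\<^sub>R w))\<^sup>2"
proof -
  define u where "u = (\<Sum>b\<in>Basis. L b *\<^sub>R b) + c *\<^sub>R w"
  have ub: "u \<bullet> b = L b + c * (w \<bullet> b)" if "b \<in> Basis" for b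
    using that by (simp add: u_def inner_add_left)
  have "(norm u)\<^sup>2 = u \<bullet> u" by (simp add: power2_norm_eq_inner)
  also have "\<dots> = (\<Sum>b\<in>Basis. (u \<bullet> b) * (u \<bullet> b))" by (rule euclidean_inner)
  also have "\<dots> = (\<Sum>b\<in>Basis. (L b + c * (w \<bullet> b))\<^sup>2)"
    by (rule sum.cong) (auto simp: ub power2_eq_square)
  finally show ?thesis by (simp add: u_def)
qed

lemma grad_nonzero:
  fixes L :: "'a::euclidean_space \<Rightarrow> real"
  assumes "linear L" "L \<noteq> (\<lambda>_. 0)"
  shows "(\<Sum>b\<in>Basis. L b *\<^sub>R b) \<noteq> 0"
proof
  assume h: "(\<Sum>b\<in>Basis. L b *\<^sub>R b) = 0"
  have Lb: "L b = 0" if "b \<in> Basis" for b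
  proof -
    have "(\<Sum>b\<in>Basis. L b *\<^sub>R b) \<bullet> b = L b" using that by (rule inner_sum_left_Basis)
    thus ?thesis using h by simp
  qed
  have "L h = 0" for h
  proof -
    have "L h = L (\<Sum>b\<in>Basis. (h \<bullet> b) *\<^sub>R b)" by (simp only: euclidean_representation)
    also have "\<dots> = (\<Sum>b\<in>Basis. L ((h \<bullet> b) *\<^sub>R b))" by (rule linear_sum[OF assms(1)])
    also have "\<dots> = (\<Sum>b\<in>Basis. (h \<bullet> b) *\<^sub>R L b)" by (rule sum.cong[OF refl]) (rule linear_scale[OF assms(1)])
    also have "\<dots> = 0" by (rule sum.neutral) (simp add: Lb)
    finally show ?thesis .
  qed
  hence "L = (\<lambda>_. 0)" by (simp add: fun_eq_iff)
  thus False using assms(2) by simp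
qed
lemma C2_data:
  assumes "C2_on U f" "y \<in> U"
  shows "(f has_derivative frechet_derivative f (at y)) (at y)"
    and "\<forall>b\<in>Basis. ((\<lambda>y. frechet_derivative f (at y) b) has_derivative
           frechet_derivative (\<lambda>y. frechet_derivative f (at y) b) (at y)) (at y)"
    and "laplacian f y = (\<Sum>b\<in>Basis. frechet_derivative (\<lambda>y. frechet_derivative f (at y) b) (at y) b)"
proof -
  show "(f has_derivative frechet_derivative f (at y)) (at y)"
    using assms unfolding C2_on_def frechet_derivative_works by blast
  show "\<forall>b\<in>Basis. ((\<lambda>y. frechet_derivative f (at y) b) has_derivative
           frechet_derivative (\<lambda>y. frechet_derivative f (at y) b) (at y)) (at y)"
    using assms unfolding C2_on_def frechet_derivative_works by blast
  show "laplacian f y = (\<Sum>b\<in>Basis. frechet_derivative (\<lambda>y. frechet_derivative f (at y) b) (at y) b)"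
    unfolding laplacian_def d2_def ..
qed

lemma C2_cont:
  assumes "C2_on U f" "open U"
  shows "continuous_on U f" "\<forall>b\<in>Basis. continuous_on U (\<lambda>y. frechet_derivative f (at y) b)"
    "continuous_on U (laplacian f)"
proof -
  show "continuous_on U f" using assms unfolding C2_on_def
    by (meson differentiable_at_imp_differentiable_on differentiable_imp_continuous_on)
  show "\<forall>b\<in>Basis. continuous_on U (\<lambda>y. frechet_derivative f (at y) b)" using assms unfolding C2_on_def
    by (meson differentiable_at_imp_differentiable_on differentiable_imp_continuous_on)
  have "continuous_on U (\<lambda>x. \<Sum>b\<in>Basis. d2 f b b x)" using assms unfolding C2_on_def
    by (intro continuous_on_sum) auto
  thus "continuous_on U (laplacian f)" unfolding laplacian_def[abs_def] .
qed

lemma compact_bound: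
  fixes f :: "'a::metric_space \<Rightarrow> real"
  assumes "compact K" "continuous_on K f"
  obtains B where "\<forall>y\<in>K. \<bar>f y\<bar> \<le> B"
proof -
  have "bounded (f ` K)" using compact_continuous_image[OF assms(2,1)] compact_imp_bounded by blast
  thus ?thesis using that unfolding bounded_real by blast
qed
lemma aux_id: "e * (a * X) * (a * X) + e * (a * (h + c * 1)) = (e * a\<^sup>2) * X\<^sup>2 + (e * a) * h + e * a * (c::real)"
  by (simp add: power2_eq_square algebra_simps)

lemma lap_barrier_sum:
  fixes L :: "'a::euclidean_space \<Rightarrow> real"
  shows "(\<Sum>b\<in>Basis. e * (a * (L b + c * (w \<bullet> b))) * (a * (L b + c * (w \<bullet> b))) + e * (a * (H b b + c * (b \<bullet> b))))
     = e * (a\<^sup>2 * (\<Sum>b\<in>Basis. (L b + c * (w \<bullet> b))\<^sup>2) + a * ((\<Sum>b\<in>Basis. H b b) + c * real DIM('a)))"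
proof -
  have "(\<Sum>b\<in>Basis. e * (a * (L b + c * (w \<bullet> b))) * (a * (L b + c * (w \<bullet> b))) + e * (a * (H b b + c * (b \<bullet> b))))
     = (\<Sum>b\<in>Basis. (e * a\<^sup>2) * (L b + c * (w \<bullet> b))\<^sup>2 + (e * a) * H b b + e * a * c)"
  proof (rule sum.cong[OF refl])
    fix b :: 'a assume "b \<in> Basis"
    hence bb: "b \<bullet> b = 1" by simp
    show "e * (a * (L b + c * (w \<bullet> b))) * (a * (L b + c * (w \<bullet> b))) + e * (a * (H b b + c * (b \<bullet> b)))
      = (e * a\<^sup>2) * (L b + c * (w \<bullet> b))\<^sup>2 + (e * a) * H b b + e * a * c"
      unfolding bb by (rule aux_id)
  qed
  also have "\<dots> = (e * a\<^sup>2) * (\<Sum>b\<in>Basis. (L b + c * (w \<bullet> b))\<^sup>2) + (e * a) * (\<Sum>b\<in>Basis. H b b) + e * a * c * real DIM('a)"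
    by (simp only: sum.distrib sum_distrib_left[symmetric] sum_constant) simp
  also have "\<dots> = e * (a\<^sup>2 * (\<Sum>b\<in>Basis. (L b + c * (w \<bullet> b))\<^sup>2) + a * ((\<Sum>b\<in>Basis. H b b) + c * real DIM('a)))"
    by (simp only: distrib_left mult.assoc)
  finally show ?thesis .
qed

lemma barrier_mp:
  fixes F \<rho> :: "'a::euclidean_space \<Rightarrow> real"
  assumes D: "open D" "bounded D" "D \<subseteq> \<Omega>" "D \<subseteq> U"
    and U: "open U" "C2_on U \<rho>" and FC2: "C2_on \<Omega> F"
    and Fc: "continuous_on (closure D) F" and pc: "continuous_on (closure D) (psi \<rho> \<beta> x)"
    and pos: "\<forall>y\<in>D. \<sigma> * laplacian F y + A * exp (a * psi \<rho> \<beta> x y) *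
        (a\<^sup>2 * (\<Sum>b\<in>Basis. (frechet_derivative \<rho> (at y) b + 2 * \<beta> * ((y - x) \<bullet> b))\<^sup>2)
         + a * (laplacian \<rho> y + 2 * \<beta> * real DIM('a))) > 0"
    and bd: "\<forall>y\<in>frontier D. \<sigma> * F y + A * exp (a * psi \<rho> \<beta> x y) + \<kappa> \<le> 0"
  shows "\<forall>y\<in>D. \<sigma> * F y + A * exp (a * psi \<rho> \<beta> x y) + \<kappa> \<le> 0"
proof -
  define Dr where "Dr y = frechet_derivative \<rho> (at y)" for y
  define H2 where "H2 y b = frechet_derivative (\<lambda>y. frechet_derivative \<rho> (at y) b) (at y)" for y b
  define DF where "DF y = frechet_derivative F (at y)" for y
  define H2F where "H2F y b = frechet_derivative (\<lambda>y. frechet_derivative F (at y) b) (at y)" for y b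
  define E where "E y = exp (a * psi \<rho> \<beta> x y)" for y
  define Dg where "Dg y = (\<lambda>h. \<sigma> * DF y h + A * (E y * (a * (Dr y h + 2 * \<beta> * ((y - x) \<bullet> h)))) + 0)" for y
  define Hg where "Hg y b = (\<lambda>c. \<sigma> * H2F y b c + A * (E y * (a * (Dr y c + 2 * \<beta> * ((y - x) \<bullet> c))) * (a * (Dr y b + 2 * \<beta> * ((y - x) \<bullet> b)))
        + E y * (a * (H2 y b c + 2 * \<beta> * (c \<bullet> b)))))" for y b
  show ?thesis
  proof (rule max_principle[where Dg = Dg and H = Hg])
    show "open D" "bounded D" by fact+
    show "continuous_on (closure D) (\<lambda>y. \<sigma> * F y + A * exp (a * psi \<rho> \<beta> x y) + \<kappa>)"
      by (intro continuous_intros Fc pc)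
    show "\<forall>y\<in>frontier D. \<sigma> * F y + A * exp (a * psi \<rho> \<beta> x y) + \<kappa> \<le> 0" by fact
    show "\<forall>y\<in>D. ((\<lambda>y. \<sigma> * F y + A * exp (a * psi \<rho> \<beta> x y) + \<kappa>) has_derivative Dg y) (at y)"
    proof
      fix y assume y: "y \<in> D"
      have yU: "y \<in> U" and yO: "y \<in> \<Omega>" using y D by auto
      have r1: "(\<rho> has_derivative Dr y) (at y)" using C2_data(1)[OF U(2) yU] by (simp add: Dr_def)
      have f1: "(F has_derivative DF y) (at y)" using C2_data(1)[OF FC2 yO] by (simp add: DF_def)
      have e1: "((\<lambda>y. exp (a * psi \<rho> \<beta> x y)) has_derivative
          (\<lambda>h. E y * (a * (Dr y h + 2 * \<beta> * ((y - x) \<bullet> h))))) (at y)"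
        using E1[OF r1, of a \<beta> x] by (simp add: E_def)
      show "((\<lambda>y. \<sigma> * F y + A * exp (a * psi \<rho> \<beta> x y) + \<kappa>) has_derivative Dg y) (at y)"
        unfolding Dg_def
        by (intro has_derivative_add has_derivative_mult_right f1 e1 has_derivative_const)
    qed
    show "\<forall>y\<in>D. \<forall>b\<in>Basis. ((\<lambda>y. Dg y b) has_derivative Hg y b) (at y)"
    proof (intro ballI)
      fix y and b :: 'a assume y: "y \<in> D" and b: "b \<in> Basis"
      have yU: "y \<in> U" and yO: "y \<in> \<Omega>" using y D by auto
      have r1: "(\<rho> has_derivative Dr y) (at y)" using C2_data(1)[OF U(2) yU] by (simp add: Dr_def)
      have r2: "((\<lambda>y. Dr y b) has_derivative H2 y b) (at y)"
        using C2_data(2)[OF U(2) yU] b by (simp add: Dr_def H2_def)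
      have f2: "((\<lambda>y. DF y b) has_derivative H2F y b) (at y)"
        using C2_data(2)[OF FC2 yO] b by (simp add: DF_def H2F_def)
      have e2: "((\<lambda>y. E y * (a * (Dr y b + 2 * \<beta> * ((y - x) \<bullet> b)))) has_derivative
          (\<lambda>c. E y * (a * (Dr y c + 2 * \<beta> * ((y - x) \<bullet> c))) * (a * (Dr y b + 2 * \<beta> * ((y - x) \<bullet> b)))
        + E y * (a * (H2 y b c + 2 * \<beta> * (c \<bullet> b))))) (at y)"
        using E2[of \<rho> Dr y b "H2 y b" a \<beta> x, OF r1 r2] by (simp add: E_def)
      have "((\<lambda>y. \<sigma> * DF y b + A * (E y * (a * (Dr y b + 2 * \<beta> * ((y - x) \<bullet> b)))) + 0) has_derivative
         (\<lambda>c. \<sigma> * H2F y b c + A * (E y * (a * (Dr y c + 2 * \<beta> * ((y - x) \<bullet> c))) * (a * (Dr y b + 2 * \<beta> * ((y - x) \<bullet> b)))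
        + E y * (a * (H2 y b c + 2 * \<beta> * (c \<bullet> b)))) + 0)) (at y)"
        by (intro has_derivative_add has_derivative_mult_right f2 e2 has_derivative_const)
      thus "((\<lambda>y. Dg y b) has_derivative Hg y b) (at y)" by (simp add: Dg_def Hg_def)
    qed
    show "\<forall>y\<in>D. 0 < (\<Sum>b\<in>Basis. Hg y b b)"
    proof
      fix y assume y: "y \<in> D"
      have "(\<Sum>b\<in>Basis. Hg y b b) = \<sigma> * (\<Sum>b\<in>Basis. H2F y b b) + A * (\<Sum>b\<in>Basis.
          E y * (a * (Dr y b + 2 * \<beta> * ((y - x) \<bullet> b))) * (a * (Dr y b + 2 * \<beta> * ((y - x) \<bullet> b)))
        + E y * (a * (H2 y b b + 2 * \<beta> * (b \<bullet> b))))"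
        by (simp only: Hg_def sum.distrib sum_distrib_left[symmetric])
      also have "\<dots> = \<sigma> * laplacian F y + A * E y *
        (a\<^sup>2 * (\<Sum>b\<in>Basis. (Dr y b + 2 * \<beta> * ((y - x) \<bullet> b))\<^sup>2)
         + a * (laplacian \<rho> y + 2 * \<beta> * real DIM('a)))"
        unfolding lap_barrier_sum[of "E y" a "Dr y" "2 * \<beta>" "y - x" "H2 y"]
        by (simp add: laplacian_def d2_def H2F_def H2_def mult.assoc)
      finally show "0 < (\<Sum>b\<in>Basis. Hg y b b)" using pos y by (simp add: E_def Dr_def)
    qed
  qed
qed

lemma psi_self: "psi \<rho> \<beta> x x = \<rho> x" by (simp add: psi_def)

lemma psi_dist: "psi \<rho> \<beta> x y = \<rho> y + \<beta> * (dist x y)\<^sup>2"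
proof -
  have "(y - x) \<bullet> (y - x) = (norm (x - y))\<^sup>2"
    by (simp add: power2_norm_eq_inner[symmetric] norm_minus_commute)
  thus ?thesis by (simp add: psi_def dist_norm)
qed

lemma local_bound:
  fixes \<Omega> :: "'a::euclidean_space set" and V \<phi> \<rho> :: "'a \<Rightarrow> real"
  assumes \<Omega>o: "open \<Omega>"
    and r: "r > 0" and rC2: "C2_on (ball z r) \<rho>"
    and rgrad: "\<forall>y\<in>ball z r. frechet_derivative \<rho> (at y) \<noteq> (\<lambda>_. 0)"
    and r\<Omega>: "\<Omega> \<inter> ball z r = {y\<in>ball z r. \<rho> y < 0}"
    and Vc: "continuous_on (closure \<Omega>) V" and Vpos: "\<forall>y\<in>\<Omega>. V y > 0" and Vnn: "\<forall>y. V y \<ge> 0"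
    and VC2: "C2_on \<Omega> V" and Vsup: "\<forall>y\<in>\<Omega>. laplacian V y \<le> 0"
    and pc: "continuous_on (closure \<Omega>) \<phi>" and pC2: "C2_on \<Omega> \<phi>" and p0: "\<forall>y\<in>frontier \<Omega>. \<phi> y = 0"
    and plap: "\<forall>y\<in>\<Omega>. \<bar>laplacian \<phi> y\<bar> \<le> K0"
    and pb: "\<forall>y\<in>closure \<Omega>. \<bar>\<phi> y\<bar> \<le> \<Phi>"
  shows "\<exists>r'>0. \<exists>C. \<forall>x\<in>\<Omega> \<inter> ball z r'. \<bar>\<phi> x\<bar> \<le> C * V x"
proof -
  define Dr where "Dr y = frechet_derivative \<rho> (at y)" for y
  have rd: "(\<rho> has_derivative Dr y) (at y)" if "y \<in> ball z r" for y
    using C2_data(1)[OF rC2 that] by (simp add: Dr_def)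
  have rcont: "continuous_on (ball z r) \<rho>" "\<forall>b\<in>Basis. continuous_on (ball z r) (\<lambda>y. Dr y b)"
     "continuous_on (ball z r) (laplacian \<rho>)"
    using C2_cont[OF rC2 open_ball] by (simp_all add: Dr_def)
  define gr where "gr y = (\<Sum>b\<in>Basis. Dr y b *\<^sub>R b)" for y
  have grc: "continuous_on (ball z r) gr"
    unfolding gr_def[abs_def] using rcont(2) by (intro continuous_on_sum continuous_on_scaleR) auto
  define Kc where "Kc = cball z (r/2)"
  have Kc: "compact Kc" "Kc \<subseteq> ball z r" "z \<in> Kc" using r by (auto simp: Kc_def)
  obtain y0 where y0: "y0 \<in> Kc" "\<forall>y\<in>Kc. norm (gr y0) \<le> norm (gr y)"
    using continuous_attains_inf[OF Kc(1) _ continuous_on_subset[OF continuous_on_norm[OF grc] Kc(2)]] Kc(3)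
    by blast
  define g0 where "g0 = norm (gr y0)"
  have g0: "g0 > 0"
  proof -
    have "linear (Dr y0)" using rd[of y0] y0(1) Kc(2) has_derivative_linear by blast
    moreover have "Dr y0 \<noteq> (\<lambda>_. 0)" using rgrad y0(1) Kc(2) by (auto simp: Dr_def)
    ultimately have "gr y0 \<noteq> 0" unfolding gr_def by (rule grad_nonzero)
    thus ?thesis by (simp add: g0_def)
  qed
  have g0le: "\<forall>y\<in>Kc. g0 \<le> norm (gr y)" using y0 by (simp add: g0_def)
  obtain L\<rho> where L\<rho>: "\<forall>y\<in>Kc. \<bar>laplacian \<rho> y\<bar> \<le> L\<rho>"
    using compact_bound[OF Kc(1) continuous_on_subset[OF rcont(3) Kc(2)]] by blast
  obtain Rm where Rm: "\<forall>y\<in>Kc. \<bar>\<rho> y\<bar> \<le> Rm"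
    using compact_bound[OF Kc(1) continuous_on_subset[OF rcont(1) Kc(2)]] by blast
  define r1 where "r1 = r / 4"
  define K where "K = g0 / r"
  define n where "n = real DIM('a)"
  define M where "M = 4 * (\<bar>L\<rho>\<bar> + 2 * K * n + 1) / g0\<^sup>2 + 1"
  have r1: "r1 > 0" using r by (simp add: r1_def)
  have K: "K > 0" using g0 r by (simp add: K_def)
  have n: "n \<ge> 0" by (simp add: n_def)
  have M: "M > 0" "M * (g0\<^sup>2 / 4) \<ge> \<bar>L\<rho>\<bar> + 2 * K * n + 1"
  proof -
    have "4 * (\<bar>L\<rho>\<bar> + 2 * K * n + 1) / g0\<^sup>2 \<ge> 0" using K n g0 by (intro divide_nonneg_pos) auto
    thus "M > 0" by (simp add: M_def)
    have "M * (g0\<^sup>2 / 4) = (\<bar>L\<rho>\<bar> + 2 * K * n + 1) + g0\<^sup>2/4" using g0 by (simp add: M_def field_simps)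
    thus "M * (g0\<^sup>2 / 4) \<ge> \<bar>L\<rho>\<bar> + 2 * K * n + 1" by simp
  qed
  have K2r1: "2 * K * r1 = g0 / 2" using r by (simp add: K_def r1_def field_simps)
  have ballsub: "cball x r1 \<subseteq> Kc" if "x \<in> ball z r1" for x
  proof
    fix y assume "y \<in> cball x r1"
    hence "dist z y \<le> r / 2" using that dist_triangle[of z y x] by (simp add: r1_def)
    thus "y \<in> Kc" by (simp add: Kc_def)
  qed
  have gradb: "(\<Sum>b\<in>Basis. (Dr y b + c * ((y - x) \<bullet> b))\<^sup>2) \<ge> g0\<^sup>2 / 4"
    if "y \<in> Kc" "dist x y \<le> r1" "\<bar>c\<bar> \<le> 2 * K" for x y c
  proof -
    have "norm (c *\<^sub>R (y - x)) = \<bar>c\<bar> * dist x y" by (simp add: dist_norm norm_minus_commute)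
    also have "\<dots> \<le> 2 * K * r1" using that K by (intro mult_mono) auto
    finally have n1: "norm (c *\<^sub>R (y - x)) \<le> g0 / 2" using K2r1 by simp
    have "norm (gr y) \<le> norm (gr y + c *\<^sub>R (y - x)) + norm (c *\<^sub>R (y - x))"
      using norm_triangle_ineq[of "gr y + c *\<^sub>R (y - x)" "-(c *\<^sub>R (y - x))"] by simp
    hence "g0 / 2 \<le> norm (gr y + c *\<^sub>R (y - x))" using g0le that(1) n1 by fastforce
    hence "(g0 / 2)\<^sup>2 \<le> (norm (gr y + c *\<^sub>R (y - x)))\<^sup>2" using g0 by (intro power_mono) auto
    also have "\<dots> = (\<Sum>b\<in>Basis. (Dr y b + c * ((y - x) \<bullet> b))\<^sup>2)"
      unfolding gr_def by (rule sum_sq_grad[symmetric])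
    finally show ?thesis by (simp add: power_divide)
  qed
  define Ks where "Ks = {y\<in>Kc. \<rho> y \<le> - K * r1\<^sup>2}"
  have Ks\<Omega>: "Ks \<subseteq> \<Omega>"
  proof
    fix y assume "y \<in> Ks"
    hence "y \<in> ball z r" "\<rho> y < 0" using Kc(2) K r1 by (auto simp: Ks_def) (smt (verit) zero_less_power mult_pos_pos)
    thus "y \<in> \<Omega>" using r\<Omega> by blast
  qed
  have Ksc: "compact Ks"
  proof -
    have "closed (Kc \<inter> \<rho> -` {..- K * r1\<^sup>2})"
      by (rule continuous_closed_preimage[OF continuous_on_subset[OF rcont(1) Kc(2)] compact_imp_closed[OF Kc(1)] closed_atMost])
    hence "compact (Kc \<inter> (Kc \<inter> \<rho> -` {..- K * r1\<^sup>2}))" using Kc(1) by (rule compact_Int_closed[rotated])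
    moreover have "Kc \<inter> (Kc \<inter> \<rho> -` {..- K * r1\<^sup>2}) = Ks" by (auto simp: Ks_def)
    ultimately show ?thesis by simp
  qed
  obtain m0 where m0: "m0 > 0" "\<forall>y\<in>Ks. m0 \<le> V y"
  proof (cases "Ks = {}")
    case True thus ?thesis using that[of 1] by simp
  next
    case False
    have "continuous_on Ks V" using Vc Ks\<Omega> closure_subset by (blast intro: continuous_on_subset)
    then obtain y1 where "y1 \<in> Ks" "\<forall>y\<in>Ks. V y1 \<le> V y"
      using continuous_attains_inf[OF Ksc False] by blast
    thus ?thesis using that[of "V y1"] Vpos Ks\<Omega> by blast
  qed
  define \<epsilon> where "\<epsilon> = m0 / exp (M * Rm)"
  have eps: "\<epsilon> > 0" "\<epsilon> * exp (M * Rm) = m0" using m0 by (auto simp: \<epsilon>_def)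
  have xin: "x \<in> ball z r" "\<rho> x < 0" "cball x r1 \<subseteq> Kc" "cball x r1 \<subseteq> ball z r"
    if "x \<in> \<Omega>" "x \<in> ball z r1" for x
  proof -
    show "x \<in> ball z r" using that r by (auto simp: r1_def)
    thus "\<rho> x < 0" using that r\<Omega> by blast
    show "cball x r1 \<subseteq> Kc" using ballsub that by blast
    thus "cball x r1 \<subseteq> ball z r" using Kc(2) by blast
  qed
  have psic: "continuous_on (cball x r1) (psi \<rho> \<beta> x)" if "x \<in> \<Omega>" "x \<in> ball z r1" for x \<beta>
  proof -
    have "continuous_on (cball x r1) \<rho>" using continuous_on_subset[OF rcont(1) xin(4)[OF that]] .
    thus ?thesis unfolding psi_def[abs_def] by (intro continuous_intros)
  qed
  have lapV: "- laplacian V y \<ge> 0" if "y \<in> \<Omega>" for y using Vsup that by simp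
  have lower: "\<epsilon> * (exp ((- M) * \<rho> x) - 1) \<le> V x" if x: "x \<in> \<Omega>" "x \<in> ball z r1" for x
  proof -
    note xi = xin[OF x]
    define D where "D = {y\<in>ball x r1. psi \<rho> K x y < 0}"
    have Dopen: "open D"
    proof -
      have "open (ball x r1 \<inter> psi \<rho> K x -` {..<0})"
        by (rule continuous_open_preimage[OF continuous_on_subset[OF psic[OF x] ball_subset_cball] open_ball open_lessThan])
      moreover have "ball x r1 \<inter> psi \<rho> K x -` {..<0} = D" by (auto simp: D_def)
      ultimately show ?thesis by simp
    qed
    have DK: "D \<subseteq> ball x r1" by (auto simp: D_def)
    have D\<Omega>: "D \<subseteq> \<Omega>"
    proof
      fix y assume y: "y \<in> D"
      hence yb: "y \<in> ball z r" using DK xi(4) ball_subset_cball by blast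
      have "\<rho> y \<le> psi \<rho> K x y" using K by (simp add: psi_dist)
      hence "\<rho> y < 0" using y by (simp add: D_def)
      thus "y \<in> \<Omega>" using yb r\<Omega> by blast
    qed
    have Dcl: "closure D \<subseteq> {y\<in>cball x r1. psi \<rho> K x y \<le> 0}"
    proof (rule closure_minimal)
      show "D \<subseteq> {y\<in>cball x r1. psi \<rho> K x y \<le> 0}" by (auto simp: D_def)
      have "closed (cball x r1 \<inter> psi \<rho> K x -` {..0})"
        by (rule continuous_closed_preimage[OF psic[OF x] closed_cball closed_atMost])
      moreover have "cball x r1 \<inter> psi \<rho> K x -` {..0} = {y\<in>cball x r1. psi \<rho> K x y \<le> 0}" by auto
      ultimately show "closed {y\<in>cball x r1. psi \<rho> K x y \<le> 0}" by simp
    qed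
    have Dcl\<Omega>: "closure D \<subseteq> closure \<Omega>" using D\<Omega> closure_mono by blast
    have main: "\<forall>y\<in>D. (-1) * V y + \<epsilon> * exp ((- M) * psi \<rho> K x y) + (- \<epsilon>) \<le> 0"
    proof (rule barrier_mp[OF Dopen _ D\<Omega> _ open_ball rC2 VC2])
      show "bounded D" using DK bounded_ball bounded_subset by blast
      show "D \<subseteq> ball z r" using DK xi(4) ball_subset_cball by blast
      show "continuous_on (closure D) V" using Vc Dcl\<Omega> by (rule continuous_on_subset)
      show "continuous_on (closure D) (psi \<rho> K x)" by (rule continuous_on_subset[OF psic[OF x]]) (use Dcl in auto)
      show "\<forall>y\<in>D. 0 < (- 1) * laplacian V y + \<epsilon> * exp ((- M) * psi \<rho> K x y) *
        ((- M)\<^sup>2 * (\<Sum>b\<in>Basis. (frechet_derivative \<rho> (at y) b + 2 * K * ((y - x) \<bullet> b))\<^sup>2)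
         + (- M) * (laplacian \<rho> y + 2 * K * real DIM('a)))"
      proof
        fix y assume y: "y \<in> D"
        have yb: "y \<in> ball x r1" using y DK by blast
        hence yK: "y \<in> Kc" "dist x y \<le> r1" using xi(3) by auto
        define S where "S = (\<Sum>b\<in>Basis. (frechet_derivative \<rho> (at y) b + 2 * K * ((y - x) \<bullet> b))\<^sup>2)"
        have S: "S \<ge> g0\<^sup>2 / 4" using gradb[OF yK, of "2 * K"] K by (simp add: S_def Dr_def)
        have L: "laplacian \<rho> y \<le> \<bar>L\<rho>\<bar>" using L\<rho> yK(1) by fastforce
        have "M * S \<ge> M * (g0\<^sup>2 / 4)" using S M(1) by (intro mult_left_mono) auto
        hence q: "M * S - (laplacian \<rho> y + 2 * K * n) \<ge> 1" using M(2) L by linarith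
        have "(- M)\<^sup>2 * S + (- M) * (laplacian \<rho> y + 2 * K * n) = M * (M * S - (laplacian \<rho> y + 2 * K * n))"
          by (simp add: power2_eq_square algebra_simps)
        also have "\<dots> \<ge> M * 1" using q M(1) by (intro mult_left_mono) auto
        finally have "(- M)\<^sup>2 * S + (- M) * (laplacian \<rho> y + 2 * K * n) > 0" using M(1) by simp
        hence "\<epsilon> * exp ((- M) * psi \<rho> K x y) * ((- M)\<^sup>2 * S + (- M) * (laplacian \<rho> y + 2 * K * n)) > 0"
          using eps by simp
        moreover have "(- 1) * laplacian V y \<ge> 0" using lapV y D\<Omega> by auto
        ultimately show "0 < (- 1) * laplacian V y + \<epsilon> * exp ((- M) * psi \<rho> K x y) *
          ((- M)\<^sup>2 * (\<Sum>b\<in>Basis. (frechet_derivative \<rho> (at y) b + 2 * K * ((y - x) \<bullet> b))\<^sup>2)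
           + (- M) * (laplacian \<rho> y + 2 * K * real DIM('a)))" by (simp add: S_def n_def)
      qed
      show "\<forall>y\<in>frontier D. (- 1) * V y + \<epsilon> * exp ((- M) * psi \<rho> K x y) + - \<epsilon> \<le> 0"
      proof
        fix y assume y: "y \<in> frontier D"
        have ycl: "y \<in> closure D" "y \<notin> D" using y Dopen by (auto simp: frontier_def interior_open)
        have yc: "dist x y \<le> r1" "psi \<rho> K x y \<le> 0" using Dcl ycl(1) by auto
        show "(- 1) * V y + \<epsilon> * exp ((- M) * psi \<rho> K x y) + - \<epsilon> \<le> 0"
        proof (cases "psi \<rho> K x y = 0")
          case True thus ?thesis using Vnn[rule_format, of y] by simp
        next
          case False
          hence ps: "psi \<rho> K x y < 0" using yc by simp
          hence "dist x y = r1" using ycl(2) yc(1) by (auto simp: D_def)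
          hence "\<rho> y = psi \<rho> K x y - K * r1\<^sup>2" by (simp add: psi_dist)
          hence ry: "\<rho> y \<le> - K * r1\<^sup>2" using ps by simp
          have yK: "y \<in> Kc" using yc(1) xi(3) by auto
          hence "y \<in> Ks" using ry by (simp add: Ks_def)
          hence Vy: "m0 \<le> V y" using m0 by blast
          have "- Rm \<le> \<rho> y" using Rm yK by fastforce
          moreover have "\<rho> y \<le> psi \<rho> K x y" using K by (simp add: psi_dist)
          ultimately have "M * (psi \<rho> K x y + Rm) \<ge> 0" using M(1) by (intro mult_nonneg_nonneg) auto
          hence "(- M) * psi \<rho> K x y \<le> M * Rm" by (simp add: algebra_simps)
          hence "exp ((- M) * psi \<rho> K x y) \<le> exp (M * Rm)" by simp
          hence "\<epsilon> * exp ((- M) * psi \<rho> K x y) \<le> m0" using eps by (metis mult_left_mono less_imp_le)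
          thus ?thesis using Vy eps by simp
        qed
      qed
    qed
    have "x \<in> D" using xi(2) r1 by (simp add: D_def psi_self)
    hence "(-1) * V x + \<epsilon> * exp ((- M) * psi \<rho> K x x) + (- \<epsilon>) \<le> 0" using main by blast
    thus ?thesis by (simp add: psi_self algebra_simps)
  qed
  define q where "q = exp (- (M * K * r1\<^sup>2))"
  have q: "q < 1" "q > 0" using M(1) K r1 by (auto simp: q_def)
  define A where "A = max 0 (max (\<Phi> / (1 - q)) ((K0 + 1) * exp (M * (Rm + K * r1\<^sup>2)) / M))"
  have A: "A \<ge> 0" "A * (1 - q) \<ge> \<Phi>" "A * M * exp (- (M * (Rm + K * r1\<^sup>2))) \<ge> K0 + 1"
  proof -
    show "A \<ge> 0" by (simp add: A_def)
    have "A \<ge> \<Phi> / (1 - q)" by (simp add: A_def)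
    thus "A * (1 - q) \<ge> \<Phi>" using q by (simp add: field_simps)
    have "A \<ge> (K0 + 1) * exp (M * (Rm + K * r1\<^sup>2)) / M" by (simp add: A_def)
    hence "A * M \<ge> (K0 + 1) * exp (M * (Rm + K * r1\<^sup>2))" using M(1) by (simp add: field_simps)
    hence "A * M * exp (- (M * (Rm + K * r1\<^sup>2))) \<ge> (K0 + 1) * exp (M * (Rm + K * r1\<^sup>2)) * exp (- (M * (Rm + K * r1\<^sup>2)))"
      by (intro mult_right_mono) auto
    also have "(K0 + 1) * exp (M * (Rm + K * r1\<^sup>2)) * exp (- (M * (Rm + K * r1\<^sup>2))) = K0 + 1"
    proof -
      have "exp (M * (Rm + K * r1\<^sup>2)) * exp (- (M * (Rm + K * r1\<^sup>2))) = 1"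
        by (simp add: exp_minus)
      thus ?thesis by (simp add: mult.assoc)
    qed
    finally show "A * M * exp (- (M * (Rm + K * r1\<^sup>2))) \<ge> K0 + 1" .
  qed
  have upper: "s * \<phi> x + A * exp (M * \<rho> x) + (- A) \<le> 0"
    if x: "x \<in> \<Omega>" "x \<in> ball z r1" and s: "s = 1 \<or> s = -1" for x s
  proof -
    note xi = xin[OF x]
    define D where "D = {y\<in>ball x r1. \<rho> y < 0}"
    have rcb: "continuous_on (cball x r1) \<rho>" using continuous_on_subset[OF rcont(1) xi(4)] .
    have Dopen: "open D"
    proof -
      have "open (ball x r1 \<inter> \<rho> -` {..<0})"
        by (rule continuous_open_preimage[OF continuous_on_subset[OF rcb ball_subset_cball] open_ball open_lessThan])
      moreover have "ball x r1 \<inter> \<rho> -` {..<0} = D" by (auto simp: D_def)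
      ultimately show ?thesis by simp
    qed
    have DK: "D \<subseteq> ball x r1" by (auto simp: D_def)
    have D\<Omega>: "D \<subseteq> \<Omega>"
    proof
      fix y assume y: "y \<in> D"
      hence yb: "y \<in> ball z r" using DK xi(4) ball_subset_cball by blast
      have "\<rho> y < 0" using y by (simp add: D_def)
      thus "y \<in> \<Omega>" using yb r\<Omega> by blast
    qed
    have Dcl: "closure D \<subseteq> {y\<in>cball x r1. \<rho> y \<le> 0}"
    proof (rule closure_minimal)
      show "D \<subseteq> {y\<in>cball x r1. \<rho> y \<le> 0}" by (auto simp: D_def)
      have "closed (cball x r1 \<inter> \<rho> -` {..0})"
        by (rule continuous_closed_preimage[OF rcb closed_cball closed_atMost])
      moreover have "cball x r1 \<inter> \<rho> -` {..0} = {y\<in>cball x r1. \<rho> y \<le> 0}" by auto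
      ultimately show "closed {y\<in>cball x r1. \<rho> y \<le> 0}" by simp
    qed
    have Dcl\<Omega>: "closure D \<subseteq> closure \<Omega>" using D\<Omega> closure_mono by blast
    have main: "\<forall>y\<in>D. s * \<phi> y + A * exp (M * psi \<rho> (- K) x y) + (- A) \<le> 0"
    proof (rule barrier_mp[OF Dopen _ D\<Omega> _ open_ball rC2 pC2])
      show "bounded D" using DK bounded_ball bounded_subset by blast
      show "D \<subseteq> ball z r" using DK xi(4) ball_subset_cball by blast
      show "continuous_on (closure D) \<phi>" using pc Dcl\<Omega> by (rule continuous_on_subset)
      show "continuous_on (closure D) (psi \<rho> (- K) x)" by (rule continuous_on_subset[OF psic[OF x]]) (use Dcl in auto)
      show "\<forall>y\<in>D. 0 < s * laplacian \<phi> y + A * exp (M * psi \<rho> (- K) x y) *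
        (M\<^sup>2 * (\<Sum>b\<in>Basis. (frechet_derivative \<rho> (at y) b + 2 * - K * ((y - x) \<bullet> b))\<^sup>2)
         + M * (laplacian \<rho> y + 2 * - K * real DIM('a)))"
      proof
        fix y assume y: "y \<in> D"
        have yb: "y \<in> ball x r1" using y DK by blast
        hence yK: "y \<in> Kc" "dist x y \<le> r1" using xi(3) by auto
        define S where "S = (\<Sum>b\<in>Basis. (frechet_derivative \<rho> (at y) b + 2 * - K * ((y - x) \<bullet> b))\<^sup>2)"
        have S: "S \<ge> g0\<^sup>2 / 4" using gradb[OF yK, of "2 * - K"] K by (simp add: S_def Dr_def)
        have L: "laplacian \<rho> y \<ge> - \<bar>L\<rho>\<bar>" using L\<rho> yK(1) by fastforce
        have "M * S \<ge> M * (g0\<^sup>2 / 4)" using S M(1) by (intro mult_left_mono) auto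
        hence qq: "M * S + (laplacian \<rho> y + 2 * - K * n) \<ge> 1" using M(2) L by linarith
        have "M\<^sup>2 * S + M * (laplacian \<rho> y + 2 * - K * n) = M * (M * S + (laplacian \<rho> y + 2 * - K * n))"
          by (simp add: power2_eq_square algebra_simps)
        also have "\<dots> \<ge> M * 1" using qq M(1) by (intro mult_left_mono) auto
        finally have T1: "M\<^sup>2 * S + M * (laplacian \<rho> y + 2 * - K * n) \<ge> M" by simp
        have "- Rm \<le> \<rho> y" using Rm yK(1) by fastforce
        moreover have "psi \<rho> (- K) x y = \<rho> y - K * (dist x y)\<^sup>2" by (simp add: psi_dist)
        moreover have "K * (dist x y)\<^sup>2 \<le> K * r1\<^sup>2" using yK(2) K by (intro mult_left_mono power_mono) auto
        ultimately have "psi \<rho> (- K) x y \<ge> - (Rm + K * r1\<^sup>2)" by linarith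
        hence "M * psi \<rho> (- K) x y \<ge> - (M * (Rm + K * r1\<^sup>2))" using M(1)
          by (metis mult_left_mono less_imp_le mult_minus_right)
        hence E: "exp (M * psi \<rho> (- K) x y) \<ge> exp (- (M * (Rm + K * r1\<^sup>2)))" by simp
        have "A * exp (M * psi \<rho> (- K) x y) * (M\<^sup>2 * S + M * (laplacian \<rho> y + 2 * - K * n))
            \<ge> A * exp (- (M * (Rm + K * r1\<^sup>2))) * M"
          using E T1 A(1) M(1) by (intro mult_mono) auto
        hence T2: "A * exp (M * psi \<rho> (- K) x y) * (M\<^sup>2 * S + M * (laplacian \<rho> y + 2 * - K * n)) \<ge> K0 + 1"
          using A(3) by (simp add: mult_ac)
        have "\<bar>laplacian \<phi> y\<bar> \<le> K0" using plap y D\<Omega> by blast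
        hence "s * laplacian \<phi> y \<ge> - K0" using s by auto
        thus "0 < s * laplacian \<phi> y + A * exp (M * psi \<rho> (- K) x y) *
          (M\<^sup>2 * (\<Sum>b\<in>Basis. (frechet_derivative \<rho> (at y) b + 2 * - K * ((y - x) \<bullet> b))\<^sup>2)
           + M * (laplacian \<rho> y + 2 * - K * real DIM('a)))" using T2 by (simp add: S_def n_def)
      qed
      show "\<forall>y\<in>frontier D. s * \<phi> y + A * exp (M * psi \<rho> (- K) x y) + - A \<le> 0"
      proof
        fix y assume y: "y \<in> frontier D"
        have ycl: "y \<in> closure D" "y \<notin> D" using y Dopen by (auto simp: frontier_def interior_open)
        have yc: "dist x y \<le> r1" "\<rho> y \<le> 0" using Dcl ycl(1) by auto
        have ycO: "y \<in> closure \<Omega>" using ycl(1) Dcl\<Omega> by blast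
        have pd: "psi \<rho> (- K) x y = \<rho> y - K * (dist x y)\<^sup>2" by (simp add: psi_dist)
        show "s * \<phi> y + A * exp (M * psi \<rho> (- K) x y) + - A \<le> 0"
        proof (cases "dist x y < r1")
          case True
          hence "\<rho> y = 0" using ycl(2) yc by (auto simp: D_def)
          moreover have "y \<in> ball z r" using yc(1) xi(4) by auto
          ultimately have "y \<notin> \<Omega>"
          proof -
            assume a: "\<rho> y = 0" "y \<in> ball z r"
            show "y \<notin> \<Omega>"
            proof
              assume "y \<in> \<Omega>"
              hence "y \<in> \<Omega> \<inter> ball z r" using a(2) by blast
              hence "\<rho> y < 0" using r\<Omega> by blast
              thus False using a(1) by simp
            qed
          qed
          hence "y \<in> frontier \<Omega>" using ycO \<Omega>o by (simp add: frontier_def interior_open)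
          hence "\<phi> y = 0" using p0 by blast
          moreover have "M * psi \<rho> (- K) x y \<le> 0" using pd \<open>\<rho> y = 0\<close> M(1) K
            by (simp add: mult_nonneg_nonneg)
          hence "exp (M * psi \<rho> (- K) x y) \<le> 1" by simp
          hence "A * exp (M * psi \<rho> (- K) x y) \<le> A" using A(1) by (metis mult_left_mono mult.right_neutral)
          ultimately show ?thesis by simp
        next
          case False
          hence "dist x y = r1" using yc(1) by simp
          hence "psi \<rho> (- K) x y \<le> - (K * r1\<^sup>2)" using pd yc(2) by simp
          hence "M * psi \<rho> (- K) x y \<le> M * (- (K * r1\<^sup>2))" using M(1) by (intro mult_left_mono) auto
          hence "M * psi \<rho> (- K) x y \<le> - (M * K * r1\<^sup>2)" by (simp add: mult.assoc)
          hence "exp (M * psi \<rho> (- K) x y) \<le> q" by (simp add: q_def)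
          hence "A * exp (M * psi \<rho> (- K) x y) \<le> A * q" using A(1) by (metis mult_left_mono)
          moreover have "s * \<phi> y \<le> \<Phi>" using pb ycO s by fastforce
          ultimately show ?thesis using A(2) by (simp add: algebra_simps)
        qed
      qed
    qed
    have "x \<in> D" using xi(2) r1 by (simp add: D_def)
    hence "s * \<phi> x + A * exp (M * psi \<rho> (- K) x x) + (- A) \<le> 0" using main by blast
    thus ?thesis by (simp add: psi_self)
  qed
  show ?thesis
  proof (rule exI[of _ r1], rule conjI[OF r1], rule exI[of _ "A / \<epsilon>"], rule ballI)
    fix x assume "x \<in> \<Omega> \<inter> ball z r1"
    hence x: "x \<in> \<Omega>" "x \<in> ball z r1" by auto
    have lo: "\<epsilon> * (exp ((- M) * \<rho> x) - 1) \<le> V x" by (rule lower[OF x])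
    have "\<epsilon> * (M * (- \<rho> x)) \<le> \<epsilon> * (exp ((- M) * \<rho> x) - 1)"
      using eps(1) exp_ge_add_one_self[of "(- M) * \<rho> x"] by (intro mult_left_mono) auto
    hence lo2: "\<epsilon> * (M * (- \<rho> x)) \<le> V x" using lo by linarith
    have up1: "\<phi> x \<le> A * (1 - exp (M * \<rho> x))" using upper[OF x, of 1] by (simp add: algebra_simps)
    have up2: "- \<phi> x \<le> A * (1 - exp (M * \<rho> x))" using upper[OF x, of "-1"] by (simp add: algebra_simps)
    have "1 + M * \<rho> x \<le> exp (M * \<rho> x)" by (rule exp_ge_add_one_self)
    hence "1 - exp (M * \<rho> x) \<le> M * (- \<rho> x)" by linarith
    hence "A * (1 - exp (M * \<rho> x)) \<le> A * (M * (- \<rho> x))"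
      using A(1) by (intro mult_left_mono) auto
    hence "\<bar>\<phi> x\<bar> \<le> A * (M * (- \<rho> x))" using up1 up2 by linarith
    also have "\<dots> = (A / \<epsilon>) * (\<epsilon> * (M * (- \<rho> x)))" using eps(1) by simp
    also have "\<dots> \<le> (A / \<epsilon>) * V x" using lo2 A(1) eps(1) by (intro mult_left_mono) auto
    finally show "\<bar>\<phi> x\<bar> \<le> A / \<epsilon> * V x" .
  qed
qed

lemma fin_leb:
  fixes \<Omega> :: "'a::euclidean_space set"
  assumes "open \<Omega>" "bounded \<Omega>"
  shows "finite_measure (lebesgue_on \<Omega>)" "\<Omega> \<in> sets lebesgue"
proof -
  show L: "\<Omega> \<in> sets lebesgue" using assms(1) by (simp add: borel_open sets_completionI_sets)
  have "\<Omega> \<in> lmeasurable" using bounded_set_imp_lmeasurable[OF assms(2) L] .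
  hence "emeasure lebesgue \<Omega> < \<infinity>" unfolding fmeasurable_def mem_Collect_eq by (rule conjunct2)
  hence "emeasure (lebesgue_on \<Omega>) (space (lebesgue_on \<Omega>)) \<noteq> \<infinity>"
    using L by (simp add: emeasure_restrict_space space_restrict_space)
  thus "finite_measure (lebesgue_on \<Omega>)" by (rule finite_measureI)
qed

lemma taylor_powr:
  fixes p y :: real
  assumes y: "1/2 \<le> y" "y \<le> 3/2"
  shows "\<bar>y powr p - 1 - p * (y - 1)\<bar> \<le> (\<bar>p * (p - 1)\<bar> / 2 * ((1/2) powr (p - 2) + (3/2) powr (p - 2))) * (y - 1)\<^sup>2"
proof (cases "y = 1")
  case True thus ?thesis by simp
next
  case False
  define diff where "diff n t = (if n = 0 then t powr p else if n = 1 then p * t powr (p - 1) else p * (p - 1) * t powr (p - 2))" for n :: nat and t :: real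
  have d: "\<forall>m t. m < 2 \<and> 1/2 \<le> t \<and> t \<le> 3/2 \<longrightarrow> DERIV (diff m) t :> diff (Suc m) t"
  proof (intro allI impI)
    fix m :: nat and t :: real assume h: "m < 2 \<and> 1/2 \<le> t \<and> t \<le> 3/2"
    hence t: "t > 0" by simp
    have "m = 0 \<or> m = 1" using h by auto
    thus "DERIV (diff m) t :> diff (Suc m) t"
    proof
      assume "m = 0"
      thus ?thesis using has_real_derivative_powr[OF t, of p] by (simp add: diff_def[abs_def])
    next
      assume "m = 1"
      have "DERIV (\<lambda>t. p * t powr (p - 1)) t :> p * ((p - 1) * t powr (p - 1 - 1))"
        by (intro DERIV_cmult has_real_derivative_powr t)
      thus ?thesis using \<open>m = 1\<close> by (simp add: diff_def[abs_def] algebra_simps)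
    qed
  qed
  obtain t where t: "(if y < 1 then y < t \<and> t < 1 else 1 < t \<and> t < y)"
    "y powr p = (\<Sum>m<2. (diff m 1 / fact m) * (y - 1)^m) + (diff 2 t / fact 2) * (y - 1)^2"
    using Taylor[of 2 diff "\<lambda>t. t powr p" "1/2" "3/2" 1 y] d y False
    by (auto simp: diff_def[abs_def])
  have tr: "1/2 \<le> t" "t \<le> 3/2" using t(1) y by (auto split: if_splits)
  have eq: "y powr p - 1 - p * (y - 1) = p * (p - 1) * t powr (p - 2) / 2 * (y - 1)\<^sup>2"
    using t(2) by (simp add: diff_def eval_nat_numeral)
  have tb: "t powr (p - 2) \<le> (1/2) powr (p - 2) + (3/2) powr (p - 2)"
  proof (cases "p - 2 \<ge> 0")
    case True
    have "t powr (p - 2) \<le> (3/2) powr (p - 2)" using tr True by (intro powr_mono2) auto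
    thus ?thesis by (smt (verit) powr_ge_zero)
  next
    case False
    have "t powr (p - 2) \<le> (1/2) powr (p - 2)" using tr False by (intro powr_mono2') auto
    thus ?thesis by (smt (verit) powr_ge_zero)
  qed
  have "\<bar>y powr p - 1 - p * (y - 1)\<bar> = \<bar>p * (p - 1)\<bar> / 2 * t powr (p - 2) * (y - 1)\<^sup>2"
    unfolding eq by (simp add: abs_mult)
  also have "\<dots> \<le> \<bar>p * (p - 1)\<bar> / 2 * ((1/2) powr (p - 2) + (3/2) powr (p - 2)) * (y - 1)\<^sup>2"
    using tb by (intro mult_right_mono mult_left_mono) auto
  finally show ?thesis .
qed

lemma alg_core:
  fixes s sE X Z p C3 ct \<alpha> \<beta> :: real
  assumes s: "s > 0" and ab: "0 < \<alpha>" "\<alpha> \<le> \<beta>" and sE: "\<alpha> * s \<le> sE" "sE \<le> \<beta> * s"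
    and X: "X \<ge> 0" and Z: "Z \<ge> 0" and p: "p > 0" and C3: "C3 \<ge> 0"
    and Zu: "Z \<le> p * X + C3 * s\<^sup>2" and Zl: "p * X - C3 * s\<^sup>2 \<le> Z" and ct: "ct \<ge> C3 / \<alpha>"
  shows "p / \<beta> * (X / s) - ct * s \<le> Z / sE \<and> Z / sE \<le> p / \<alpha> * (X / s) + ct * s"
proof
  have sEp: "sE > 0" using s ab sE by (smt (verit) mult_pos_pos)
  have b: "\<beta> > 0" using ab by simp
  have as: "\<alpha> * s > 0" using ab s by simp
  have "Z / sE \<le> Z / (\<alpha> * s)" using Z sE(1) as sEp by (intro divide_left_mono) (auto intro: mult_pos_pos)
  also have "\<dots> \<le> (p * X + C3 * s\<^sup>2) / (\<alpha> * s)" using Zu ab s by (intro divide_right_mono) auto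
  also have "\<dots> = p / \<alpha> * (X / s) + C3 / \<alpha> * s" using ab s by (simp add: field_simps power2_eq_square)
  also have "\<dots> \<le> p / \<alpha> * (X / s) + ct * s" using ct s by (intro add_left_mono mult_right_mono) auto
  finally show "Z / sE \<le> p / \<alpha> * (X / s) + ct * s" .
  have C3b: "C3 / \<beta> \<le> ct"
  proof -
    have "C3 / \<beta> \<le> C3 / \<alpha>" using ab C3 by (intro divide_left_mono) auto
    thus ?thesis using ct by linarith
  qed
  show "p / \<beta> * (X / s) - ct * s \<le> Z / sE"
  proof (cases "p * X - C3 * s\<^sup>2 \<le> 0")
    case True
    have "p / \<beta> * (X / s) = (p * X) / (\<beta> * s)" using b s by simp
    also have "\<dots> \<le> (C3 * s\<^sup>2) / (\<beta> * s)" using True b s by (intro divide_right_mono) auto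
    also have "\<dots> = C3 / \<beta> * s" using b s by (simp add: field_simps power2_eq_square)
    also have "\<dots> \<le> ct * s" using C3b s by (intro mult_right_mono) auto
    finally have "p / \<beta> * (X / s) - ct * s \<le> 0" by simp
    also have "0 \<le> Z / sE" using Z sEp by simp
    finally show ?thesis .
  next
    case False
    have "C3 / \<beta> * s \<le> ct * s" using C3b s by (intro mult_right_mono) auto
    hence "p / \<beta> * (X / s) - ct * s \<le> p / \<beta> * (X / s) - C3 / \<beta> * s" by linarith
    also have "\<dots> = (p * X - C3 * s\<^sup>2) / (\<beta> * s)" using b s by (simp add: field_simps power2_eq_square)
    also have "\<dots> \<le> (p * X - C3 * s\<^sup>2) / sE" using False sE(2) sEp by (intro divide_left_mono) auto
    also have "\<dots> \<le> Z / sE" using Zl sEp by (intro divide_right_mono) auto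
    finally show ?thesis .
  qed
qed

lemma final_alg:
  fixes E En N I p C3 a1 :: real
  assumes p: "p > 0" and a1: "a1 \<ge> 1" and E: "E \<ge> 0" and C3: "C3 \<ge> 0"
    and lo: "(p + 1) / (2 * a1\<^sup>2) * E \<le> En" and up: "En \<le> (p + 1) / 2 * a1\<^sup>2 * E"
    and NI: "\<bar>N - p * I\<bar> \<le> C3 * E"
  shows "sqrt 2 * p / (sqrt (p + 1) * a1) * (\<bar>I\<bar> / sqrt E) - (C3 * sqrt 2 * a1 / sqrt (p + 1) + 1) * sqrt E \<le> \<bar>N\<bar> / sqrt En
       \<and> \<bar>N\<bar> / sqrt En \<le> sqrt 2 * p / sqrt (p + 1) * a1 * (\<bar>I\<bar> / sqrt E) + (C3 * sqrt 2 * a1 / sqrt (p + 1) + 1) * sqrt E"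
proof (cases "E = 0")
  case True
  hence "En = 0" using lo up by simp
  thus ?thesis using True by simp
next
  case False
  hence Ep: "E > 0" using E by simp
  define s where "s = sqrt E"
  have s: "s > 0" using Ep by (simp add: s_def)
  define \<alpha> where "\<alpha> = sqrt (p + 1) / (sqrt 2 * a1)"
  define \<beta> where "\<beta> = sqrt (p + 1) * a1 / sqrt 2"
  have a: "\<alpha> > 0" "\<beta> > 0" using p a1 by (auto simp: \<alpha>_def \<beta>_def)
  have a2: "\<alpha>\<^sup>2 = (p + 1) / (2 * a1\<^sup>2)" "\<beta>\<^sup>2 = (p + 1) / 2 * a1\<^sup>2"
    using p by (simp_all add: \<alpha>_def \<beta>_def power_divide power_mult_distrib)
  have ab: "\<alpha> \<le> \<beta>"
  proof -
    have "sqrt (p + 1) / (sqrt 2 * a1) \<le> sqrt (p + 1) / sqrt 2"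
      using a1 p by (intro divide_left_mono) auto
    also have "\<dots> \<le> sqrt (p + 1) * a1 / sqrt 2"
      using a1 p by (intro divide_right_mono) auto
    finally show ?thesis by (simp add: \<alpha>_def \<beta>_def)
  qed
  have sE: "\<alpha> * s \<le> sqrt En" "sqrt En \<le> \<beta> * s"
  proof -
    have "sqrt (\<alpha>\<^sup>2 * E) \<le> sqrt En" using lo unfolding a2 by (intro real_sqrt_le_mono)
    thus "\<alpha> * s \<le> sqrt En" using a by (simp add: real_sqrt_mult s_def)
    have "sqrt En \<le> sqrt (\<beta>\<^sup>2 * E)" using up unfolding a2 by (intro real_sqrt_le_mono)
    thus "sqrt En \<le> \<beta> * s" using a by (simp add: real_sqrt_mult s_def)
  qed
  have E2: "E = s\<^sup>2" using E by (simp add: s_def)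
  have Zu: "\<bar>N\<bar> \<le> p * \<bar>I\<bar> + C3 * s\<^sup>2" and Zl: "p * \<bar>I\<bar> - C3 * s\<^sup>2 \<le> \<bar>N\<bar>"
  proof -
    have pI: "\<bar>p * I\<bar> = p * \<bar>I\<bar>" using p by (simp add: abs_mult)
    have h1: "\<bar>N\<bar> \<le> \<bar>p * I\<bar> + \<bar>N - p * I\<bar>" using abs_triangle_ineq[of "p * I" "N - p * I"] by simp
    have h2: "\<bar>p * I\<bar> \<le> \<bar>N\<bar> + \<bar>N - p * I\<bar>"
      using abs_triangle_ineq[of N "p * I - N"] abs_minus_commute[of N "p * I"] by simp
    show "\<bar>N\<bar> \<le> p * \<bar>I\<bar> + C3 * s\<^sup>2" "p * \<bar>I\<bar> - C3 * s\<^sup>2 \<le> \<bar>N\<bar>"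
      using h1 h2 NI unfolding pI E2 by linarith+
  qed
  have ct: "C3 * sqrt 2 * a1 / sqrt (p + 1) + 1 \<ge> C3 / \<alpha>" using p by (simp add: \<alpha>_def field_simps)
  have core: "p / \<beta> * (\<bar>I\<bar> / s) - (C3 * sqrt 2 * a1 / sqrt (p + 1) + 1) * s \<le> \<bar>N\<bar> / sqrt En
     \<and> \<bar>N\<bar> / sqrt En \<le> p / \<alpha> * (\<bar>I\<bar> / s) + (C3 * sqrt 2 * a1 / sqrt (p + 1) + 1) * s"
    by (rule alg_core[OF s a(1) ab sE _ _ p C3 Zu Zl ct]) auto
  have e1: "p / \<beta> = sqrt 2 * p / (sqrt (p + 1) * a1)" by (simp add: \<beta>_def)
  have e2: "p / \<alpha> = sqrt 2 * p / sqrt (p + 1) * a1" by (simp add: \<alpha>_def)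
  show ?thesis using core unfolding e1 e2 s_def .
qed

definition Cpw :: "real \<Rightarrow> real" where
  "Cpw p = \<bar>p * (p - 1)\<bar> / 2 * ((1/2) powr (p - 2) + (3/2) powr (p - 2))"

lemma Cpw_nonneg: "Cpw p \<ge> 0" by (simp add: Cpw_def)

lemma pointwise:
  fixes V vv \<phi> \<delta> p C\<phi> :: real
  assumes V: "V > 0" and vv: "vv \<ge> 0" and h: "\<bar>vv - V\<bar> \<le> \<delta> * V" and d: "\<delta> \<le> 1/2"
    and ph: "\<bar>\<phi>\<bar> \<le> C\<phi> * V"
  shows "\<bar>(vv powr p - V powr p) * \<phi> - p * ((vv - V) * \<phi> * V powr (p - 1))\<bar>
     \<le> (Cpw p * C\<phi>) * ((vv - V)\<^sup>2 * V powr (p - 1))"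
proof -
  define \<theta> where "\<theta> = vv / V"
  have vvt: "vv = \<theta> * V" using V by (simp add: \<theta>_def)
  have "\<bar>\<theta> - 1\<bar> \<le> \<delta>"
  proof -
    have "vv - V = (\<theta> - 1) * V" unfolding vvt by (simp add: algebra_simps)
    hence "\<bar>vv - V\<bar> = \<bar>\<theta> - 1\<bar> * V" using V by (simp add: abs_mult)
    hence "\<bar>\<theta> - 1\<bar> * V = \<bar>vv - V\<bar>" by simp
    hence "\<bar>\<theta> - 1\<bar> * V \<le> \<delta> * V" using h by simp
    thus ?thesis using V by simp
  qed
  hence th: "1/2 \<le> \<theta>" "\<theta> \<le> 3/2" using d by auto
  define W where "W = V powr (p - 1)"
  have VW: "V powr p = W * V"
  proof -
    have "V powr p = V powr ((p - 1) + 1)" by simp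
    also have "\<dots> = W * V" using V by (simp only: powr_add W_def powr_one')
    finally show ?thesis .
  qed
  have W0: "W \<ge> 0" by (simp add: W_def)
  have vvp: "(\<theta> * V) powr p = \<theta> powr p * V powr p" by (rule powr_mult)
  have eq: "(vv powr p - V powr p) * \<phi> - p * ((vv - V) * \<phi> * V powr (p - 1))
       = \<phi> * (W * V) * (\<theta> powr p - 1 - p * (\<theta> - 1))"
    unfolding vvt vvp VW W_def[symmetric] by (simp add: algebra_simps)
  have "\<bar>(vv powr p - V powr p) * \<phi> - p * ((vv - V) * \<phi> * V powr (p - 1))\<bar>
      = \<bar>\<phi>\<bar> * (W * V) * \<bar>\<theta> powr p - 1 - p * (\<theta> - 1)\<bar>"
    unfolding eq using W0 V by (simp add: abs_mult)
  also have "\<dots> \<le> (C\<phi> * V) * (W * V) * (Cpw p * (\<theta> - 1)\<^sup>2)"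
    using taylor_powr[OF th, of p] ph W0 V
    by (intro mult_mono) (auto simp: Cpw_def)
  also have "\<dots> = (Cpw p * C\<phi>) * ((vv - V)\<^sup>2 * V powr (p - 1))"
    unfolding vvt W_def[symmetric] by (simp add: power2_eq_square algebra_simps)
  finally show ?thesis .
qed


lemma abs_mult_le: "\<bar>a\<bar> \<le> A \<Longrightarrow> \<bar>b\<bar> \<le> B \<Longrightarrow> \<bar>a * b\<bar> \<le> A * (B::real)"
  by (simp add: abs_mult mult_mono')

lemma measure_part:
  fixes \<Omega> :: "'a::euclidean_space set" and vv V \<phi> :: "'a \<Rightarrow> real"
  assumes fm: "finite_measure (lebesgue_on \<Omega>)"
    and mv: "vv \<in> borel_measurable (lebesgue_on \<Omega>)" and mV: "V \<in> borel_measurable (lebesgue_on \<Omega>)"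
    and mp: "\<phi> \<in> borel_measurable (lebesgue_on \<Omega>)"
    and vnn: "\<forall>x. vv x \<ge> 0" and Vpos: "\<forall>x\<in>\<Omega>. V x > 0" and Vb: "\<forall>x\<in>\<Omega>. V x \<le> Vm"
    and pb: "\<forall>x\<in>\<Omega>. \<bar>\<phi> x\<bar> \<le> \<Phi>" and pV: "\<forall>x\<in>\<Omega>. \<bar>\<phi> x\<bar> \<le> C\<phi> * V x"
    and H: "AE x in lebesgue_on \<Omega>. \<bar>vv x - V x\<bar> \<le> \<delta> * V x" and d: "\<delta> \<le> 1/2" and p: "p \<ge> 1"
  shows "\<bar>(\<integral>x. (vv x powr p - V x powr p) * \<phi> x \<partial>lebesgue_on \<Omega>)
           - p * (\<integral>x. (vv x - V x) * \<phi> x * V x powr (p - 1) \<partial>lebesgue_on \<Omega>)\<bar>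
         \<le> (Cpw p * C\<phi>) * (\<integral>x. (vv x - V x)\<^sup>2 * V x powr (p - 1) \<partial>lebesgue_on \<Omega>)"
proof -
  let ?M = "lebesgue_on \<Omega>"
  have good: "AE x in ?M. x \<in> \<Omega> \<and> \<bar>vv x - V x\<bar> \<le> \<delta> * V x"
    using H AE_space by eventually_elim (simp add: space_restrict_space)
  define Wm where "Wm = Vm powr (p - 1)"
  define B3 where "B3 = (2 * Vm) powr p + Vm powr p"
  have bnds: "\<bar>vv x - V x\<bar> \<le> Vm \<and> \<bar>V x powr (p - 1)\<bar> \<le> Wm \<and> \<bar>vv x powr p - V x powr p\<bar> \<le> B3
      \<and> \<bar>\<phi> x\<bar> \<le> \<Phi>"
    if x: "x \<in> \<Omega>" "\<bar>vv x - V x\<bar> \<le> \<delta> * V x" for x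
  proof -
    have V0: "V x > 0" "V x \<le> Vm" using Vpos Vb x by auto
    have "\<delta> * V x \<le> 1/2 * V x" using d V0 by (intro mult_right_mono) auto
    hence e1: "\<bar>vv x - V x\<bar> \<le> V x / 2" using x(2) by simp
    hence "\<bar>vv x - V x\<bar> \<le> Vm" using V0 by simp
    moreover have "\<bar>V x powr (p - 1)\<bar> \<le> Wm" using V0 p by (simp add: Wm_def powr_mono2)
    moreover have "\<bar>vv x powr p - V x powr p\<bar> \<le> B3"
    proof -
      have "vv x \<le> 2 * Vm" using e1 V0 abs_le_D1[of "vv x - V x"] by linarith
      hence "vv x powr p \<le> (2 * Vm) powr p" using vnn p by (intro powr_mono2) auto
      moreover have "V x powr p \<le> Vm powr p" using V0 p by (intro powr_mono2) auto
      ultimately show ?thesis by (simp add: B3_def abs_le_iff) (smt (verit) powr_ge_zero)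
    qed
    ultimately show ?thesis using pb x by auto
  qed
  have i1: "integrable ?M (\<lambda>x. (vv x powr p - V x powr p) * \<phi> x)"
  proof (rule finite_measure.integrable_const_bound[OF fm, where B = "B3 * \<Phi>"])
    show "AE x in ?M. norm ((vv x powr p - V x powr p) * \<phi> x) \<le> B3 * \<Phi>"
      using good by eventually_elim (use bnds in \<open>auto intro!: abs_mult_le\<close>)
  qed (intro borel_measurable_times borel_measurable_diff powr_real_measurable borel_measurable_power mv mV mp measurable_const, simp_all)
  have i2: "integrable ?M (\<lambda>x. (vv x - V x) * \<phi> x * V x powr (p - 1))"
  proof (rule finite_measure.integrable_const_bound[OF fm, where B = "Vm * \<Phi> * Wm"])
    show "AE x in ?M. norm ((vv x - V x) * \<phi> x * V x powr (p - 1)) \<le> Vm * \<Phi> * Wm"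
      using good by eventually_elim (use bnds in \<open>auto intro!: abs_mult_le\<close>)
  qed (intro borel_measurable_times borel_measurable_diff powr_real_measurable borel_measurable_power mv mV mp measurable_const, simp_all)
  have i3: "integrable ?M (\<lambda>x. (vv x - V x)\<^sup>2 * V x powr (p - 1))"
  proof (rule finite_measure.integrable_const_bound[OF fm, where B = "Vm * Vm * Wm"])
    show "AE x in ?M. norm ((vv x - V x)\<^sup>2 * V x powr (p - 1)) \<le> Vm * Vm * Wm"
      using good
    proof eventually_elim
      case (elim x)
      hence b: "\<bar>vv x - V x\<bar> \<le> Vm" "\<bar>V x powr (p - 1)\<bar> \<le> Wm" using bnds by blast+
      have "\<bar>(vv x - V x) * (vv x - V x) * V x powr (p - 1)\<bar> \<le> Vm * Vm * Wm"
        by (intro abs_mult_le b)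
      thus ?case by (simp add: power2_eq_square)
    qed
  qed (intro borel_measurable_times borel_measurable_diff powr_real_measurable borel_measurable_power mv mV mp measurable_const, simp_all)
  let ?g1 = "\<lambda>x. (vv x powr p - V x powr p) * \<phi> x"
  let ?g2 = "\<lambda>x. (vv x - V x) * \<phi> x * V x powr (p - 1)"
  let ?g3 = "\<lambda>x. (vv x - V x)\<^sup>2 * V x powr (p - 1)"
  let ?C = "Cpw p * C\<phi>"
  have eq1: "(\<integral>x. ?g1 x \<partial>?M) - p * (\<integral>x. ?g2 x \<partial>?M) = (\<integral>x. ?g1 x - p * ?g2 x \<partial>?M)"
    using Bochner_Integration.integral_diff[OF i1 integrable_mult_right[OF i2, of p]] by simp
  have le1: "\<bar>\<integral>x. ?g1 x - p * ?g2 x \<partial>?M\<bar> \<le> (\<integral>x. \<bar>?g1 x - p * ?g2 x\<bar> \<partial>?M)"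
    using integral_norm_bound[of ?M "\<lambda>x. ?g1 x - p * ?g2 x"] by simp
  have le2: "(\<integral>x. \<bar>?g1 x - p * ?g2 x\<bar> \<partial>?M) \<le> (\<integral>x. ?C * ?g3 x \<partial>?M)"
      proof (rule integral_mono_AE)
    show "integrable ?M (\<lambda>x. \<bar>?g1 x - p * ?g2 x\<bar>)"
      by (rule integrable_abs[OF Bochner_Integration.integrable_diff[OF i1 integrable_mult_right[OF i2]]])
    show "integrable ?M (\<lambda>x. ?C * ?g3 x)"
      using i3 by (rule integrable_mult_right)
    show "AE x in ?M. \<bar>?g1 x - p * ?g2 x\<bar> \<le> ?C * ?g3 x"
      using good
    proof eventually_elim
      case (elim x)
      have xO: "x \<in> \<Omega>" and hx: "\<bar>vv x - V x\<bar> \<le> \<delta> * V x" using elim by auto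
      show ?case by (rule pointwise[OF Vpos[rule_format, OF xO] vnn[rule_format] hx d pV[rule_format, OF xO]])
    qed
  qed
  have eq2: "(\<integral>x. ?C * ?g3 x \<partial>?M) = ?C * (\<integral>x. ?g3 x \<partial>?M)"
    by (rule integral_mult_right_zero)
  show ?thesis unfolding eq1 using le1 le2 eq2 by linarith
qed

lemma global_bound:
  fixes \<Omega> :: "'a::euclidean_space set" and V \<phi> :: "'a \<Rightarrow> real"
  assumes \<Omega>o: "open \<Omega>" and \<Omega>b: "bounded \<Omega>" and bdry: "C2alpha_boundary \<alpha> \<Omega>"
    and Vc: "continuous_on (closure \<Omega>) V" and Vpos: "\<forall>y\<in>\<Omega>. V y > 0" and Vnn: "\<forall>y. V y \<ge> 0"
    and VC2: "C2_on \<Omega> V" and Vsup: "\<forall>y\<in>\<Omega>. laplacian V y \<le> 0"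
    and pc: "continuous_on (closure \<Omega>) \<phi>" and pC2: "C2_on \<Omega> \<phi>" and p0: "\<forall>y\<in>frontier \<Omega>. \<phi> y = 0"
    and plap: "\<forall>y\<in>\<Omega>. \<bar>laplacian \<phi> y\<bar> \<le> K0"
  shows "\<exists>C. \<forall>x\<in>\<Omega>. \<bar>\<phi> x\<bar> \<le> C * V x"
proof -
  have cc: "compact (closure \<Omega>)" using \<Omega>b by (simp add: compact_closure)
  obtain \<Phi> where pb: "\<forall>y\<in>closure \<Omega>. \<bar>\<phi> y\<bar> \<le> \<Phi>" using compact_bound[OF cc pc] by blast
  have loc: "\<exists>R>0. \<exists>C. \<forall>x\<in>\<Omega> \<inter> ball y R. \<bar>\<phi> x\<bar> \<le> C * V x" if y: "y \<in> closure \<Omega>" for y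
  proof (cases "y \<in> \<Omega>")
    case False
    hence yf: "y \<in> frontier \<Omega>" using y closure_Un_frontier by blast
    then obtain r \<rho> where r: "r > 0" "C2_on (ball y r) \<rho>"
        "\<forall>x\<in>ball y r. frechet_derivative \<rho> (at x) \<noteq> (\<lambda>_. 0)"
        "\<Omega> \<inter> ball y r = {x\<in>ball y r. \<rho> x < 0}"
      using bdry unfolding C2alpha_boundary_def by blast
    show ?thesis by (rule local_bound[OF \<Omega>o r Vc Vpos Vnn VC2 Vsup pc pC2 p0 plap pb])
  next
    case True
    have "continuous_on \<Omega> V" using Vc closure_subset by (rule continuous_on_subset)
    then obtain d where d: "d > 0" "\<forall>x\<in>\<Omega>. dist x y < d \<longrightarrow> dist (V x) (V y) < V y / 2"
      using True Vpos unfolding continuous_on_iff by (metis half_gt_zero)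
    have P: "\<Phi> \<ge> 0" using pb True closure_subset by force
    show ?thesis
    proof (rule exI[of _ d], rule conjI[OF d(1)], rule exI[of _ "2 * \<Phi> / V y"], rule ballI)
      fix x assume x: "x \<in> \<Omega> \<inter> ball y d"
      hence "dist (V x) (V y) < V y / 2" using d by (auto simp: dist_commute)
      hence Vx: "V x \<ge> V y / 2" unfolding dist_real_def by linarith
      have "\<bar>\<phi> x\<bar> \<le> \<Phi>" using pb x closure_subset by force
      also have "\<Phi> = (2 * \<Phi> / V y) * (V y / 2)" using Vpos True by force
      also have "\<dots> \<le> (2 * \<Phi> / V y) * V x" using Vx P Vpos True by (intro mult_left_mono) auto
      finally show "\<bar>\<phi> x\<bar> \<le> 2 * \<Phi> / V y * V x" .
    qed
  qed
  obtain R C where RC: "\<forall>y\<in>closure \<Omega>. R y > 0 \<and> (\<forall>x\<in>\<Omega> \<inter> ball y (R y). \<bar>\<phi> x\<bar> \<le> C y * V x)"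
  proof -
    have "\<forall>y\<in>closure \<Omega>. \<exists>R. R > 0 \<and> (\<exists>C. \<forall>x\<in>\<Omega> \<inter> ball y R. \<bar>\<phi> x\<bar> \<le> C * V x)"
      using loc by blast
    then obtain R where R: "\<forall>y\<in>closure \<Omega>. R y > 0 \<and> (\<exists>C. \<forall>x\<in>\<Omega> \<inter> ball y (R y). \<bar>\<phi> x\<bar> \<le> C * V x)"
      by (rule bchoice[elim_format]) blast
    hence "\<forall>y\<in>closure \<Omega>. \<exists>C. \<forall>x\<in>\<Omega> \<inter> ball y (R y). \<bar>\<phi> x\<bar> \<le> C * V x" by blast
    then obtain C where "\<forall>y\<in>closure \<Omega>. \<forall>x\<in>\<Omega> \<inter> ball y (R y). \<bar>\<phi> x\<bar> \<le> C y * V x"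
      by (rule bchoice[elim_format]) blast
    thus ?thesis using that R by blast
  qed
  obtain C' where C': "C' \<subseteq> closure \<Omega>" "finite C'" "closure \<Omega> \<subseteq> (\<Union>y\<in>C'. ball y (R y))"
  proof -
    have cov: "closure \<Omega> \<subseteq> (\<Union>y\<in>closure \<Omega>. ball y (R y))"
    proof
      fix y assume "y \<in> closure \<Omega>"
      thus "y \<in> (\<Union>y\<in>closure \<Omega>. ball y (R y))" using RC by (intro UN_I[of y]) auto
    qed
    have opn: "\<And>T. T \<in> closure \<Omega> \<Longrightarrow> open ((\<lambda>y. ball y (R y)) T)" by simp
    from compactE_image[OF cc opn cov] show ?thesis using that by blast
  qed
  show ?thesis
  proof (rule exI[of _ "\<Sum>y\<in>C'. \<bar>C y\<bar>"], rule ballI)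
    fix x assume x: "x \<in> \<Omega>"
    then obtain y where y: "y \<in> C'" "x \<in> ball y (R y)" using C'(3) closure_subset by blast
    have "\<bar>\<phi> x\<bar> \<le> C y * V x" using RC y C'(1) x by blast
    also have "\<dots> \<le> \<bar>C y\<bar> * V x" using Vnn by (intro mult_right_mono) auto
    also have "\<dots> \<le> (\<Sum>y\<in>C'. \<bar>C y\<bar>) * V x"
      using Vnn y(1) C'(2) by (intro mult_right_mono member_le_sum) auto
    finally show "\<bar>\<phi> x\<bar> \<le> (\<Sum>y\<in>C'. \<bar>C y\<bar>) * V x" .
  qed
qed

theorem lemma3p4:
  fixes \<Omega> :: "'a::euclidean_space set"
    and \<alpha> m p q T c \<delta> cb t0 :: real
    and u0 S V :: "'a \<Rightarrow> real"
    and u w v :: "real \<Rightarrow> 'a \<Rightarrow> real"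
    and lam :: "nat \<Rightarrow> real" and Nk :: "nat \<Rightarrow> nat"
    and \<phi> :: "nat \<Rightarrow> nat \<Rightarrow> 'a \<Rightarrow> real"
  assumes dom: "open \<Omega>" "connected \<Omega>" "bounded \<Omega>" "\<Omega> \<noteq> {}"
    and bdry: "0 < \<alpha>" "\<alpha> < 1" "C2alpha_boundary \<alpha> \<Omega>"
    and m_range: "max 0 (real DIM('a) - 2) / (real DIM('a) + 2) < m" "m < 1"
    and p_def: "p = 1 / m"
    and q_cond: "q \<ge> 1" "m < (real DIM('a) - 2) / real DIM('a) \<longrightarrow> q > real DIM('a) * (1 - m) / 2"
    and u0_data: "\<forall>x\<in>\<Omega>. u0 x \<ge> 0" "u0 \<in> borel_measurable (lebesgue_on \<Omega>)"
                 "integrable (lebesgue_on \<Omega>) (\<lambda>x. \<bar>u0 x\<bar> powr q)"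
    and u_nonneg: "\<forall>\<tau>\<ge>0. \<forall>x\<in>\<Omega>. u \<tau> x \<ge> 0"
    and u_int: "\<forall>\<tau>\<ge>0. integrable (lebesgue_on \<Omega>) (u \<tau>)"
    and u_init: "u 0 = u0" "((\<lambda>\<tau>. \<integral>x. \<bar>u \<tau> x - u0 x\<bar> \<partial>lebesgue_on \<Omega>) \<longlongrightarrow> 0) (at_right 0)"
    and u_pde: "\<forall>\<psi> \<tau>1 \<tau>2. test_fun \<Omega> \<psi> \<longrightarrow> 0 < \<tau>1 \<longrightarrow> \<tau>1 \<le> \<tau>2 \<longrightarrow>
        (\<integral>x. u \<tau>2 x * \<psi> x \<partial>lebesgue_on \<Omega>) - (\<integral>x. u \<tau>1 x * \<psi> x \<partial>lebesgue_on \<Omega>)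
        = (LBINT \<tau>=\<tau>1..\<tau>2. (\<integral>x. u \<tau> x powr m * laplacian \<psi> x \<partial>lebesgue_on \<Omega>))"
    and u_bc: "\<forall>\<tau>>0. \<forall>z\<in>frontier \<Omega>. ((\<lambda>x. u \<tau> x powr m) \<longlongrightarrow> 0) (at z within \<Omega>)"
    and T_pos: "T > 0"
    and T_ext: "\<forall>\<tau>\<ge>T. AE x in lebesgue_on \<Omega>. u \<tau> x = 0"
               "\<forall>\<tau>. 0 \<le> \<tau> \<and> \<tau> < T \<longrightarrow> \<not> (AE x in lebesgue_on \<Omega>. u \<tau> x = 0)"
    and c_def: "c = 1 / ((1 - m) * T)"
    and w_def: "w = (\<lambda>t x. exp (c * t) * u (T - T * exp (- t / T)) x)"
    and v_def: "v = (\<lambda>t x. w t x powr m)"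
    and S_sol: "continuous_on (closure \<Omega>) S" "\<forall>x\<in>\<Omega>. S x > 0" "\<forall>x\<in>frontier \<Omega>. S x = 0"
               "C2_on \<Omega> (\<lambda>x. S x powr m)"
               "\<forall>x\<in>\<Omega>. - laplacian (\<lambda>y. S y powr m) x = c * S x"
    and w_conv: "\<forall>\<epsilon>>0. \<exists>t1. \<forall>t\<ge>t1. AE x in lebesgue_on \<Omega>. \<bar>w t x - S x\<bar> \<le> \<epsilon>"
    and V_def: "V = (\<lambda>x. S x powr m)"
    and eig_mono: "\<forall>k\<ge>1. lam k < lam (Suc k)"
    and eig_basis: "\<forall>k\<ge>1. Nk k \<ge> 1 \<and>
        (\<forall>j\<in>{1..Nk k}. \<phi> k j \<in> eigspace \<Omega> V p (lam k)) \<and>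
        (\<forall>i\<in>{1..Nk k}. \<forall>j\<in>{1..Nk k}. L2V_inner \<Omega> V p (\<phi> k i) (\<phi> k j) = (if i = j then 1 else 0)) \<and>
        (\<forall>\<psi>\<in>eigspace \<Omega> V p (lam k). \<exists>a::nat \<Rightarrow> real. \<forall>x\<in>\<Omega>. \<psi> x = (\<Sum>j=1..Nk k. a j * \<phi> k j x))"
    and eig_all: "\<forall>\<mu>. is_eigenvalue \<Omega> V p \<mu> \<longrightarrow> (\<exists>k\<ge>1. \<mu> = lam k)"
    and delta: "0 < \<delta>" "\<delta> < 1 / (2 * p)"
    and t0: "t0 \<ge> 0"
    and H1': "\<forall>t\<ge>t0. AE x in lebesgue_on \<Omega>. \<bar>v t x - V x\<bar> \<le> \<delta> * V x"
    and cb_pos: "cb > 0"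
    and energy_cmp: "\<forall>t\<ge>t0.
        (p + 1) / (2 * (1 + cb * \<delta>)\<^sup>2) * linE \<Omega> V p (\<lambda>x. v t x - V x) \<le> nonlinE \<Omega> V p (v t) \<and>
        nonlinE \<Omega> V p (v t) \<le> (p + 1) / 2 * (1 + cb * \<delta>)\<^sup>2 * linE \<Omega> V p (\<lambda>x. v t x - V x)"
  shows "\<forall>k\<ge>1. \<forall>j\<in>{1..Nk k}. \<exists>ct>0. \<forall>t\<ge>t0.
        sqrt 2 * p / (sqrt (p + 1) * (1 + cb * \<delta>)) * linQ \<Omega> V p (\<phi> k j) (\<lambda>x. v t x - V x)
          - ct * sqrt (linE \<Omega> V p (\<lambda>x. v t x - V x))
        \<le> nonlinQ \<Omega> V p (\<phi> k j) (v t) \<and>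
        nonlinQ \<Omega> V p (\<phi> k j) (v t)
        \<le> sqrt 2 * p / sqrt (p + 1) * (1 + cb * \<delta>) * linQ \<Omega> V p (\<phi> k j) (\<lambda>x. v t x - V x)
          + ct * sqrt (linE \<Omega> V p (\<lambda>x. v t x - V x))"
proof (intro allI impI ballI)
  fix k :: nat and j assume k: "k \<ge> 1" and j: "j \<in> {1..Nk k}"
  have phE: "\<phi> k j \<in> eigspace \<Omega> V p (lam k)" using eig_basis k j by auto
  hence ph: "C2_on \<Omega> (\<phi> k j)" "continuous_on (closure \<Omega>) (\<phi> k j)" "\<forall>x\<in>frontier \<Omega>. \<phi> k j x = 0"
    "\<forall>x\<in>\<Omega>. - laplacian (\<phi> k j) x = lam k * V x powr (p - 1) * \<phi> k j x"
    by (auto simp: eigspace_def)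
  have m0: "m > 0"
  proof -
    have "max 0 (real DIM('a) - 2) / (real DIM('a) + 2) \<ge> 0" by (intro divide_nonneg_nonneg) auto
    thus ?thesis using m_range(1) by linarith
  qed
  have p1: "p > 1" using m0 m_range(2) by (simp add: p_def)
  have cpos: "c > 0" using m_range(2) T_pos by (simp add: c_def)
  have Sge: "\<forall>x\<in>closure \<Omega>. S x \<ge> 0"
    using continuous_ge_on_closure[OF S_sol(1)] S_sol(2) by (metis less_imp_le)
  have Vc: "continuous_on (closure \<Omega>) V"
    unfolding V_def by (rule continuous_on_powr'[OF S_sol(1) continuous_on_const]) (use Sge m0 in auto)
  have Vpos: "\<forall>y\<in>\<Omega>. V y > 0" using S_sol(2) by (simp add: V_def) (metis less_irrefl)
  have Vnn: "\<forall>y. V y \<ge> 0" by (simp add: V_def)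
  have VC2: "C2_on \<Omega> V" using S_sol(4) by (simp add: V_def)
  have Vsup: "\<forall>y\<in>\<Omega>. laplacian V y \<le> 0"
  proof
    fix y assume y: "y \<in> \<Omega>"
    have "- laplacian V y = c * S y" using S_sol(5) y by (simp add: V_def)
    moreover have "c * S y > 0" using cpos S_sol(2) y by simp
    ultimately show "laplacian V y \<le> 0" by simp
  qed
  have cc: "compact (closure \<Omega>)" using dom(3) by (simp add: compact_closure)
  have hc: "continuous_on (closure \<Omega>) (\<lambda>y. lam k * V y powr (p - 1) * \<phi> k j y)"
  proof -
    have "continuous_on (closure \<Omega>) (\<lambda>y. V y powr (p - 1))"
      by (rule continuous_on_powr'[OF Vc continuous_on_const]) (use Vnn p1 in auto)
    thus ?thesis by (intro continuous_on_mult[OF continuous_on_mult[OF continuous_on_const] ph(2)])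
  qed
  obtain K0 where K0: "\<forall>y\<in>closure \<Omega>. \<bar>lam k * V y powr (p - 1) * \<phi> k j y\<bar> \<le> K0"
    using compact_bound[OF cc hc] by blast
  have plap: "\<forall>y\<in>\<Omega>. \<bar>laplacian (\<phi> k j) y\<bar> \<le> K0"
  proof
    fix y assume y: "y \<in> \<Omega>"
    have "- laplacian (\<phi> k j) y = lam k * V y powr (p - 1) * \<phi> k j y" using ph(4) y by blast
    hence "laplacian (\<phi> k j) y = - (lam k * V y powr (p - 1) * \<phi> k j y)" by linarith
    thus "\<bar>laplacian (\<phi> k j) y\<bar> \<le> K0" using K0 y closure_subset by fastforce
  qed
  obtain C\<phi> where Cphi: "\<forall>x\<in>\<Omega>. \<bar>\<phi> k j x\<bar> \<le> C\<phi> * V x"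
    using global_bound[OF dom(1) dom(3) bdry(3) Vc Vpos Vnn VC2 Vsup ph(2) ph(1) ph(3) plap] by blast
  have Cphi': "\<forall>x\<in>\<Omega>. \<bar>\<phi> k j x\<bar> \<le> \<bar>C\<phi>\<bar> * V x"
  proof
    fix x assume x: "x \<in> \<Omega>"
    have "C\<phi> * V x \<le> \<bar>C\<phi>\<bar> * V x" using Vnn by (intro mult_right_mono) auto
    thus "\<bar>\<phi> k j x\<bar> \<le> \<bar>C\<phi>\<bar> * V x" using Cphi x by fastforce
  qed
  obtain Vm where Vm: "\<forall>y\<in>closure \<Omega>. \<bar>V y\<bar> \<le> Vm" using compact_bound[OF cc Vc] by blast
  obtain \<Phi> where Phi: "\<forall>y\<in>closure \<Omega>. \<bar>\<phi> k j y\<bar> \<le> \<Phi>" using compact_bound[OF cc ph(2)] by blast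
  have Vb: "\<forall>x\<in>\<Omega>. V x \<le> Vm" using Vm closure_subset by fastforce
  have pb: "\<forall>x\<in>\<Omega>. \<bar>\<phi> k j x\<bar> \<le> \<Phi>" using Phi closure_subset by fastforce
  have fin: "finite_measure (lebesgue_on \<Omega>)" "\<Omega> \<in> sets lebesgue" using fin_leb[OF dom(1) dom(3)] by auto
  have mV: "V \<in> borel_measurable (lebesgue_on \<Omega>)"
    using continuous_imp_measurable_on_sets_lebesgue[OF continuous_on_subset[OF Vc closure_subset] fin(2)] .
  have mph: "\<phi> k j \<in> borel_measurable (lebesgue_on \<Omega>)"
    using continuous_imp_measurable_on_sets_lebesgue[OF continuous_on_subset[OF ph(2) closure_subset] fin(2)] .
  define C3 where "C3 = Cpw p * \<bar>C\<phi>\<bar>"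
  have C3: "C3 \<ge> 0" by (simp add: C3_def Cpw_nonneg)
  define a1 where "a1 = 1 + cb * \<delta>"
  have a1: "a1 \<ge> 1" using cb_pos delta by (simp add: a1_def)
  define ct where "ct = C3 * sqrt 2 * a1 / sqrt (p + 1) + 1"
  have ctp: "ct > 0"
  proof -
    have "C3 * sqrt 2 * a1 / sqrt (p + 1) \<ge> 0" using C3 a1 p1 by (intro divide_nonneg_nonneg mult_nonneg_nonneg) auto
    thus ?thesis by (simp add: ct_def)
  qed
  have d2: "\<delta> \<le> 1/2"
  proof -
    have "1 / (2 * p) \<le> 1 / 2" using p1 by (simp add: field_simps)
    thus ?thesis using delta by linarith
  qed
  show "\<exists>ct>0. \<forall>t\<ge>t0.
        sqrt 2 * p / (sqrt (p + 1) * (1 + cb * \<delta>)) * linQ \<Omega> V p (\<phi> k j) (\<lambda>x. v t x - V x)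
          - ct * sqrt (linE \<Omega> V p (\<lambda>x. v t x - V x))
        \<le> nonlinQ \<Omega> V p (\<phi> k j) (v t) \<and>
        nonlinQ \<Omega> V p (\<phi> k j) (v t)
        \<le> sqrt 2 * p / sqrt (p + 1) * (1 + cb * \<delta>) * linQ \<Omega> V p (\<phi> k j) (\<lambda>x. v t x - V x)
          + ct * sqrt (linE \<Omega> V p (\<lambda>x. v t x - V x))"
  proof (rule exI[of _ ct], rule conjI[OF ctp], rule allI, rule impI)
    fix t assume t: "t0 \<le> t"
    define s where "s = T - T * exp (- t / T)"
    have s0: "s \<ge> 0"
    proof -
      have "exp (- t / T) \<le> 1" using t t0 T_pos by simp
      thus ?thesis using T_pos by (simp add: s_def mult_left_le)
    qed
    have vt: "v t = (\<lambda>x. (exp (c * t) * u s x) powr m)" by (simp add: v_def w_def s_def)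
    have mu: "u s \<in> borel_measurable (lebesgue_on \<Omega>)"
      using u_int s0 by (blast intro: borel_measurable_integrable)
    have mv: "v t \<in> borel_measurable (lebesgue_on \<Omega>)"
      unfolding vt by (intro powr_real_measurable borel_measurable_times mu measurable_const, simp_all)
    have vnn: "\<forall>x. v t x \<ge> 0" by (simp add: vt)
    have H: "AE x in lebesgue_on \<Omega>. \<bar>v t x - V x\<bar> \<le> \<delta> * V x" using H1' t by blast
    have NI: "\<bar>(\<integral>x. (v t x powr p - V x powr p) * \<phi> k j x \<partial>lebesgue_on \<Omega>)
        - p * L2V_inner \<Omega> V p (\<lambda>x. v t x - V x) (\<phi> k j)\<bar> \<le> C3 * linE \<Omega> V p (\<lambda>x. v t x - V x)"
      using measure_part[OF fin(1) mv mV mph vnn Vpos Vb pb Cphi' H d2, of p] p1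
      by (simp add: L2V_inner_def linE_def C3_def)
    have E0: "linE \<Omega> V p (\<lambda>x. v t x - V x) \<ge> 0"
      unfolding linE_def by (rule Bochner_Integration.integral_nonneg) (simp add: Vnn)
    have ec: "(p + 1) / (2 * a1\<^sup>2) * linE \<Omega> V p (\<lambda>x. v t x - V x) \<le> nonlinE \<Omega> V p (v t)"
      "nonlinE \<Omega> V p (v t) \<le> (p + 1) / 2 * a1\<^sup>2 * linE \<Omega> V p (\<lambda>x. v t x - V x)"
      using energy_cmp t by (auto simp: a1_def)
    have p0: "p > 0" using p1 by simp
    note fa = final_alg[OF p0 a1 E0 C3 ec NI]
    have lq: "linQ \<Omega> V p (\<phi> k j) (\<lambda>x. v t x - V x)
        = \<bar>L2V_inner \<Omega> V p (\<lambda>x. v t x - V x) (\<phi> k j)\<bar> / sqrt (linE \<Omega> V p (\<lambda>x. v t x - V x))"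
      by (simp add: linQ_def L2V_norm_def L2V_inner_def linE_def power2_eq_square)
    have nq: "nonlinQ \<Omega> V p (\<phi> k j) (v t)
        = \<bar>\<integral>x. (v t x powr p - V x powr p) * \<phi> k j x \<partial>lebesgue_on \<Omega>\<bar> / sqrt (nonlinE \<Omega> V p (v t))"
      by (simp add: nonlinQ_def)
    show "sqrt 2 * p / (sqrt (p + 1) * (1 + cb * \<delta>)) * linQ \<Omega> V p (\<phi> k j) (\<lambda>x. v t x - V x)
          - ct * sqrt (linE \<Omega> V p (\<lambda>x. v t x - V x))
        \<le> nonlinQ \<Omega> V p (\<phi> k j) (v t) \<and>
        nonlinQ \<Omega> V p (\<phi> k j) (v t)
        \<le> sqrt 2 * p / sqrt (p + 1) * (1 + cb * \<delta>) * linQ \<Omega> V p (\<phi> k j) (\<lambda>x. v t x - V x)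
          + ct * sqrt (linE \<Omega> V p (\<lambda>x. v t x - V x))"
      unfolding lq nq ct_def a1_def[symmetric] using fa p1 by simp
  qed
qed

end
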